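(* Let $k\geq 3$ be an integer, $\sigma=\begin{pmatrix}\frac13&0\\0&\frac23\end{pmatrix}$, and $D_1=\sigma\otimes\frac{I_3}{3}\otimes\frac{I_k}{k}\in M_{6k}$. There exists an extreme point of the convex set $\mathcal{CP}(M_{6k},M_{6k};D_1,D_1)$ with Choi rank $8k$.
   Context: $M_n$ denotes the complex $n\times n$ matrices. For positive semidefinite $A\in M_{d_1}$, $B\in M_{d_2}$, $\mathcal{CP}(M_{d_1},M_{d_2};A,B)$ is the convex set of completely positive maps $\Phi:M_{d_1}\to M_{d_2}$ with $\Phi(I_{d_1})=B$ and $\Phi^*(I_{d_2})=A$ ($\Phi^*$ the Hilbert–Schmidt adjoint); equivalently $\Phi(X)=\sum_iK_iXK_i^\dagger$ with $\sum_iK_i^\dagger K_i=A$, $\sum_iK_iK_i^\dagger=B$. An extreme point of a convex set $\mathcal{K}$ is an element not expressible as $t\Phi_1+(1-t)\Phi_2$ with $t\in(0,1)$ and distinct $\Phi_1,\Phi_2\in\mathcal{K}$. The Choi rank of $\Phi$ is the rank of $\sum_{r,s}E_{rs}\otimes\Phi(E_{rs})$. *)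

theory Defs
  imports "Jordan_Normal_Form.DL_Rank" "Jordan_Normal_Form.Schur_Decomposition"
begin

(* A map Phi : M_d1 -> M_d2 is a function complex mat => complex mat; to make it
   determined by its action on M_d1 we require it to vanish (be the zero d2 x d2 matrix)
   outside carrier_mat d1 d1 (canonical extension). *)

definition kron :: "complex mat \<Rightarrow> complex mat \<Rightarrow> complex mat" where
  "kron A B = mat (dim_row A * dim_row B) (dim_col A * dim_col B)
     (\<lambda>(i,j). A $$ (i div dim_row B, j div dim_col B) * B $$ (i mod dim_row B, j mod dim_col B))"

definition unit_mat :: "nat \<Rightarrow> nat \<Rightarrow> nat \<Rightarrow> complex mat" where
  "unit_mat n r s = mat n n (\<lambda>(i,j). if i = r \<and> j = s then 1 else 0)"

definition msum :: "nat \<Rightarrow> nat \<Rightarrow> ('a \<Rightarrow> complex mat) \<Rightarrow> 'a list \<Rightarrow> complex mat" where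
  "msum m n f xs = foldr (\<lambda>x acc. f x + acc) xs (0\<^sub>m m n)"

definition mtrace :: "complex mat \<Rightarrow> complex" where
  "mtrace A = (\<Sum>i<dim_row A. A $$ (i, i))"

definition completely_positive :: "nat \<Rightarrow> nat \<Rightarrow> (complex mat \<Rightarrow> complex mat) \<Rightarrow> bool" where
  "completely_positive d1 d2 \<Phi> \<longleftrightarrow>
     (\<exists>Ks. (\<forall>K \<in> set Ks. K \<in> carrier_mat d2 d1) \<and>
           (\<forall>X \<in> carrier_mat d1 d1. \<Phi> X = msum d2 d2 (\<lambda>K. K * X * mat_adjoint K) Ks))"

(* CP(M_d1, M_d2; A, B): Phi(I) = B and Phi^*(I) = A, where Phi^* is the
   Hilbert-Schmidt adjoint: <Phi^*(Y), X> = <Y, Phi(X)>, <P,Q> = tr(P^dagger Q);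
   with Y = I this reads tr(A^dagger X) = tr(Phi(X)) for all X in M_d1. *)
definition CP_set :: "nat \<Rightarrow> nat \<Rightarrow> complex mat \<Rightarrow> complex mat \<Rightarrow> (complex mat \<Rightarrow> complex mat) set" where
  "CP_set d1 d2 A B = {\<Phi>. completely_positive d1 d2 \<Phi> \<and>
      (\<forall>X. X \<notin> carrier_mat d1 d1 \<longrightarrow> \<Phi> X = 0\<^sub>m d2 d2) \<and>
      \<Phi> (1\<^sub>m d1) = B \<and>
      (\<forall>X \<in> carrier_mat d1 d1. mtrace (mat_adjoint A * X) = mtrace (\<Phi> X))}"

definition extreme_point_of :: "(complex mat \<Rightarrow> complex mat) \<Rightarrow> (complex mat \<Rightarrow> complex mat) set \<Rightarrow> bool" where
  "extreme_point_of \<Phi> K \<longleftrightarrow> \<Phi> \<in> K \<and>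
     \<not> (\<exists>t::real. \<exists>\<Phi>1 \<in> K. \<exists>\<Phi>2 \<in> K. 0 < t \<and> t < 1 \<and> \<Phi>1 \<noteq> \<Phi>2 \<and>
           \<Phi> = (\<lambda>X. complex_of_real t \<cdot>\<^sub>m \<Phi>1 X + complex_of_real (1 - t) \<cdot>\<^sub>m \<Phi>2 X))"

definition choi_matrix :: "nat \<Rightarrow> nat \<Rightarrow> (complex mat \<Rightarrow> complex mat) \<Rightarrow> complex mat" where
  "choi_matrix d1 d2 \<Phi> = msum (d1 * d2) (d1 * d2)
     (\<lambda>(r,s). kron (unit_mat d1 r s) (\<Phi> (unit_mat d1 r s))) (List.product [0..<d1] [0..<d1])"

definition choi_rank :: "nat \<Rightarrow> nat \<Rightarrow> (complex mat \<Rightarrow> complex mat) \<Rightarrow> nat" where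
  "choi_rank d1 d2 \<Phi> = vec_space.rank (d1 * d2) (choi_matrix d1 d2 \<Phi>)"

definition sigma_mat :: "complex mat" where
  "sigma_mat = mat 2 2 (\<lambda>(i,j). if i = 0 \<and> j = 0 then 1/3 else if i = 1 \<and> j = 1 then 2/3 else 0)"

definition D1_mat :: "nat \<Rightarrow> complex mat" where
  "D1_mat k = kron (kron sigma_mat ((1/3) \<cdot>\<^sub>m 1\<^sub>m 3)) ((1 / of_nat k) \<cdot>\<^sub>m 1\<^sub>m k)"

end

theory Submission
  imports Defs "Jordan_Normal_Form.DL_Rank_Submatrix"
begin

lemma adj_dim[simp]: "dim_row (mat_adjoint A) = dim_col A" "dim_col (mat_adjoint A) = dim_row A"
  unfolding mat_adjoint_def by auto
lemma adj_index[simp]: "i < dim_col A \<Longrightarrow> j < dim_row A \<Longrightarrow> mat_adjoint (A::complex mat) $$ (i,j) = cnj (A $$ (j,i))"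
  unfolding mat_adjoint_def by (auto simp: mat_of_rows_def conjugate_complex_def)
lemma adj_carrier: "A \<in> carrier_mat n m \<Longrightarrow> mat_adjoint A \<in> carrier_mat m n"
  by (metis adj_dim carrier_matD carrier_matI)

lemma KXK_index:
  assumes "K \<in> carrier_mat d d" "X \<in> carrier_mat d d" "K' \<in> carrier_mat d d" "p < d" "q < d"
  shows "(K * X * mat_adjoint K') $$ (p,q) = (\<Sum>a<d. \<Sum>b<d. K$$(p,a) * X$$(a,b) * cnj (K'$$(q,b)))"
proof -
  have "(K * X * mat_adjoint K') $$ (p,q) = (\<Sum>b<d. (K*X) $$ (p,b) * cnj (K'$$(q,b)))"
    using assms by (simp add: scalar_prod_def atLeast0LessThan)
  also have "\<dots> = (\<Sum>b<d. (\<Sum>a<d. K$$(p,a) * X$$(a,b)) * cnj (K'$$(q,b)))"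
    using assms by (simp add: scalar_prod_def atLeast0LessThan)
  also have "\<dots> = (\<Sum>b<d. \<Sum>a<d. K$$(p,a) * X$$(a,b) * cnj (K'$$(q,b)))"
    by (simp add: sum_distrib_right)
  also have "\<dots> = (\<Sum>a<d. \<Sum>b<d. K$$(p,a) * X$$(a,b) * cnj (K'$$(q,b)))"
    by (rule sum.swap)
  finally show ?thesis .
qed

lemma msum_carrier:
  assumes "\<forall>x\<in>set xs. f x \<in> carrier_mat m n"
  shows "msum m n f xs \<in> carrier_mat m n"
  using assms by (induction xs) (auto simp: msum_def)

lemma msum_index:
  assumes "\<forall>x\<in>set xs. f x \<in> carrier_mat m n" "i < m" "j < n"
  shows "msum m n f xs $$ (i,j) = (\<Sum>x\<leftarrow>xs. f x $$ (i,j))"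
  using assms
proof (induction xs)
  case Nil then show ?case by (simp add: msum_def)
next
  case (Cons a xs)
  have c: "msum m n f xs \<in> carrier_mat m n" using Cons.prems msum_carrier by auto
  have "msum m n f (a # xs) = f a + msum m n f xs" by (simp add: msum_def)
  then show ?case using Cons c by auto
qed

lemma sum_list_nth: "(\<Sum>x\<leftarrow>xs. g x) = (\<Sum>n<length xs. g (xs ! n))"
  by (simp add: sum_list_sum_nth atLeast0LessThan)

lemma sum_list_map_upt: "(\<Sum>x\<leftarrow>map K [0..<r]. g x) = (\<Sum>n<r. g (K n))"
  by (simp add: sum_list_nth)

definition kmap :: "nat \<Rightarrow> nat \<Rightarrow> (nat \<Rightarrow> complex mat) \<Rightarrow> complex mat \<Rightarrow> complex mat" where
  "kmap d r K X = (if X \<in> carrier_mat d d then msum d d (\<lambda>M. M * X * mat_adjoint M) (map K [0..<r]) else 0\<^sub>m d d)"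

definition kent :: "nat \<Rightarrow> nat \<Rightarrow> (nat \<Rightarrow> complex mat) \<Rightarrow> complex mat \<Rightarrow> nat \<Rightarrow> nat \<Rightarrow> complex" where
  "kent d r K X p q = (\<Sum>n<r. \<Sum>a<d. \<Sum>b<d. K n $$ (p,a) * X $$ (a,b) * cnj (K n $$ (q,b)))"

lemma kmap_carrier: "\<forall>i<r. K i \<in> carrier_mat d d \<Longrightarrow> kmap d r K X \<in> carrier_mat d d"
  unfolding kmap_def by (auto intro!: msum_carrier mult_carrier_mat adj_carrier)

lemma kmap_index:
  assumes "\<forall>i<r. K i \<in> carrier_mat d d" "X \<in> carrier_mat d d" "p < d" "q < d"
  shows "kmap d r K X $$ (p,q) = kent d r K X p q"
proof -
  have c: "\<forall>M\<in>set (map K [0..<r]). M * X * mat_adjoint M \<in> carrier_mat d d"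
    using assms(1,2) by (auto intro!: mult_carrier_mat adj_carrier)
  have "kmap d r K X $$ (p,q) = (\<Sum>M\<leftarrow>map K [0..<r]. (M * X * mat_adjoint M) $$ (p,q))"
    unfolding kmap_def using assms msum_index[OF c] by simp
  also have "\<dots> = (\<Sum>n<r. (K n * X * mat_adjoint (K n)) $$ (p,q))"
    by (rule sum_list_map_upt)
  also have "\<dots> = kent d r K X p q"
    unfolding kent_def using assms by (intro sum.cong refl KXK_index) auto
  finally show ?thesis .
qed

lemma CP_set_kraus:
  assumes "\<Psi> \<in> CP_set d d A B"
  obtains N r where "\<forall>i<r. N i \<in> carrier_mat d d" "\<forall>X \<in> carrier_mat d d. \<Psi> X = kmap d r N X"
proof -
  from assms obtain Ks where Ks: "\<forall>K \<in> set Ks. K \<in> carrier_mat d d"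
     "\<forall>X \<in> carrier_mat d d. \<Psi> X = msum d d (\<lambda>K. K * X * mat_adjoint K) Ks"
    unfolding CP_set_def completely_positive_def by auto
  have "map (\<lambda>i. Ks ! i) [0..<length Ks] = Ks" by (rule map_nth)
  then have "\<forall>X \<in> carrier_mat d d. \<Psi> X = kmap d (length Ks) (\<lambda>i. Ks ! i) X"
    using Ks(2) unfolding kmap_def by auto
  moreover have "\<forall>i<length Ks. Ks ! i \<in> carrier_mat d d" using Ks(1) by auto
  ultimately show ?thesis using that by blast
qed

lemma unit_mat_index[simp]: "a < d \<Longrightarrow> b < d \<Longrightarrow> unit_mat d q q' $$ (a,b) = (if a = q \<and> b = q' then 1 else 0)"
  unfolding unit_mat_def by simp

lemma kent_unit:
  assumes "q < d" "q' < d"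
  shows "kent d r F (unit_mat d q q') p p' = (\<Sum>n<r. F n $$ (p,q) * cnj (F n $$ (p',q')))"
proof -
  have e: "\<And>n a. a < d \<Longrightarrow> (\<Sum>b<d. F n $$ (p,a) * unit_mat d q q' $$ (a,b) * cnj (F n $$ (p',b)))
      = (if a = q then F n $$ (p,q) * cnj (F n $$ (p',q')) else 0)"
  proof -
    fix n a assume a: "a < d"
    have "(\<Sum>b<d. F n $$ (p,a) * unit_mat d q q' $$ (a,b) * cnj (F n $$ (p',b)))
       = (\<Sum>b<d. if b = q' then (if a = q then F n $$ (p,q) * cnj (F n $$ (p',q')) else 0) else 0)"
      using a by (intro sum.cong) auto
    also have "\<dots> = (if a = q then F n $$ (p,q) * cnj (F n $$ (p',q')) else 0)"
      using assms by (simp add: sum.delta)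
    finally show "?thesis n a" .
  qed
  have "\<And>n. (\<Sum>a<d. \<Sum>b<d. F n $$ (p,a) * unit_mat d q q' $$ (a,b) * cnj (F n $$ (p',b)))
      = F n $$ (p,q) * cnj (F n $$ (p',q'))"
  proof -
    fix n
    have "(\<Sum>a<d. \<Sum>b<d. F n $$ (p,a) * unit_mat d q q' $$ (a,b) * cnj (F n $$ (p',b)))
       = (\<Sum>a<d. if a = q then F n $$ (p,q) * cnj (F n $$ (p',q')) else 0)"
      by (rule sum.cong[OF refl], rule e, simp)
    then show "?thesis n" using assms by (simp add: sum.delta)
  qed
  then show ?thesis unfolding kent_def by simp
qed

abbreviation sq :: "nat \<Rightarrow> (nat \<times> nat) set" where "sq d \<equiv> {..<d} \<times> {..<d}"

definition ip :: "nat \<Rightarrow> complex mat \<Rightarrow> complex mat \<Rightarrow> complex" where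
  "ip d R F = (\<Sum>x\<in>sq d. cnj (R $$ x) * F $$ x)"

definition W :: "nat \<Rightarrow> (nat \<Rightarrow> complex mat) \<Rightarrow> nat \<times> nat \<Rightarrow> nat \<times> nat \<Rightarrow> complex" where
  "W r F x y = (\<Sum>n<r. F n $$ x * cnj (F n $$ y))"

definition Qs :: "nat \<Rightarrow> nat \<Rightarrow> (nat \<Rightarrow> complex mat) \<Rightarrow> complex mat \<Rightarrow> complex" where
  "Qs d r F R = (\<Sum>x\<in>sq d. \<Sum>y\<in>sq d. cnj (R $$ x) * R $$ y * W r F x y)"

lemma ip_cnj: "ip d A B = cnj (ip d B A)"
  unfolding ip_def by (simp add: mult.commute)

lemma normsq: "cnj z * z = of_real ((cmod z)\<^sup>2)"
  by (metis complex_norm_square mult.commute)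

lemma ip_self: "ip d R R = of_real (\<Sum>x\<in>sq d. (cmod (R $$ x))\<^sup>2)"
  unfolding ip_def of_real_sum by (rule sum.cong[OF refl], rule normsq)

lemma ip_self_zero: "ip d R R = 0 \<Longrightarrow> x \<in> sq d \<Longrightarrow> R $$ x = 0"
proof -
  assume "ip d R R = 0" "x \<in> sq d"
  then have "(\<Sum>x\<in>sq d. (cmod (R $$ x))\<^sup>2) = 0" unfolding ip_self by (metis of_real_eq_0_iff)
  then have "\<forall>x\<in>sq d. (cmod (R $$ x))\<^sup>2 = 0"
    by (subst sum_nonneg_eq_0_iff[symmetric]) auto
  then show "R $$ x = 0" using \<open>x \<in> sq d\<close> by auto
qed

lemma Qs_eq: "Qs d r F R = (\<Sum>n<r. ip d R (F n) * cnj (ip d R (F n)))"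
proof -
  have "Qs d r F R = (\<Sum>x\<in>sq d. \<Sum>y\<in>sq d. \<Sum>n<r. (cnj (R $$ x) * F n $$ x) * (R $$ y * cnj (F n $$ y)))"
    unfolding Qs_def W_def by (simp add: sum_distrib_left mult_ac)
  also have "\<dots> = (\<Sum>x\<in>sq d. \<Sum>n<r. \<Sum>y\<in>sq d. (cnj (R $$ x) * F n $$ x) * (R $$ y * cnj (F n $$ y)))"
    by (rule sum.cong[OF refl], rule sum.swap)
  also have "\<dots> = (\<Sum>n<r. \<Sum>x\<in>sq d. \<Sum>y\<in>sq d. (cnj (R $$ x) * F n $$ x) * (R $$ y * cnj (F n $$ y)))"
    by (rule sum.swap)
  also have "\<dots> = (\<Sum>n<r. ip d R (F n) * cnj (ip d R (F n)))"
    unfolding ip_def by (simp add: sum_product)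
  finally show ?thesis .
qed

lemma Qs_real: "Qs d r F R = of_real (\<Sum>n<r. (cmod (ip d R (F n)))\<^sup>2)"
  unfolding Qs_eq of_real_sum by (rule sum.cong[OF refl], metis complex_norm_square)

lemma decomp_zero:
  fixes t :: real
  assumes dec: "\<forall>x\<in>sq d. \<forall>y\<in>sq d. W r K x y = of_real t * W r1 N x y + of_real (1-t) * W r2 M x y"
    and t: "0 < t" "t < 1" and Q0: "Qs d r K R = 0"
  shows "\<forall>n<r1. ip d R (N n) = 0"
proof -
  have "Qs d r K R = (\<Sum>x\<in>sq d. \<Sum>y\<in>sq d. of_real t * (cnj (R $$ x) * R $$ y * W r1 N x y)
          + of_real (1-t) * (cnj (R $$ x) * R $$ y * W r2 M x y))"
    unfolding Qs_def
  proof (intro sum.cong refl)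
    fix x y assume xy: "x \<in> sq d" "y \<in> sq d"
    have e: "W r K x y = of_real t * W r1 N x y + of_real (1-t) * W r2 M x y"
      using dec xy by blast
    show "cnj (R $$ x) * R $$ y * W r K x y = of_real t * (cnj (R $$ x) * R $$ y * W r1 N x y)
          + of_real (1-t) * (cnj (R $$ x) * R $$ y * W r2 M x y)"
      unfolding e distrib_left by (simp add: mult_ac)
  qed
  also have "\<dots> = of_real t * Qs d r1 N R + of_real (1-t) * Qs d r2 M R"
    unfolding Qs_def by (simp add: sum.distrib sum_distrib_left)
  finally have "Qs d r K R = of_real t * Qs d r1 N R + of_real (1-t) * Qs d r2 M R" .
  then have "complex_of_real 0 = complex_of_real (t * (\<Sum>n<r1. (cmod (ip d R (N n)))\<^sup>2) + (1-t) * (\<Sum>n<r2. (cmod (ip d R (M n)))\<^sup>2))"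
    using Q0 unfolding Qs_real of_real_add of_real_mult by simp
  then have e: "0 = t * (\<Sum>n<r1. (cmod (ip d R (N n)))\<^sup>2) + (1-t) * (\<Sum>n<r2. (cmod (ip d R (M n)))\<^sup>2)"
    by (simp only: of_real_eq_iff)
  have a: "(\<Sum>n<r1. (cmod (ip d R (N n)))\<^sup>2) \<ge> 0" "(\<Sum>n<r2. (cmod (ip d R (M n)))\<^sup>2) \<ge> 0"
    by (auto intro: sum_nonneg)
  have "t * (\<Sum>n<r1. (cmod (ip d R (N n)))\<^sup>2) \<ge> 0" "(1-t) * (\<Sum>n<r2. (cmod (ip d R (M n)))\<^sup>2) \<ge> 0"
    using a t by auto
  then have "t * (\<Sum>n<r1. (cmod (ip d R (N n)))\<^sup>2) = 0" using e by linarith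
  then have "(\<Sum>n<r1. (cmod (ip d R (N n)))\<^sup>2) = 0" using t by simp
  then have "\<forall>n\<in>{..<r1}. (cmod (ip d R (N n)))\<^sup>2 = 0"
    by (subst sum_nonneg_eq_0_iff[symmetric]) auto
  then show ?thesis by auto
qed

lemma ip_lincomb:
  assumes "\<forall>x\<in>sq d. B $$ x = N $$ x - (\<Sum>i<r. c i * K i $$ x)"
  shows "ip d A B = ip d A N - (\<Sum>i<r. c i * ip d A (K i))"
proof -
  have "ip d A B = (\<Sum>x\<in>sq d. cnj (A $$ x) * N $$ x - (\<Sum>i<r. c i * (cnj (A $$ x) * K i $$ x)))"
    unfolding ip_def
  proof (intro sum.cong refl)
    fix x assume "x \<in> sq d"
    then have e: "B $$ x = N $$ x - (\<Sum>i<r. c i * K i $$ x)" using assms by blast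
    show "cnj (A $$ x) * B $$ x = cnj (A $$ x) * N $$ x - (\<Sum>i<r. c i * (cnj (A $$ x) * K i $$ x))"
      unfolding e by (simp add: right_diff_distrib sum_distrib_left mult_ac)
  qed
  also have "\<dots> = ip d A N - (\<Sum>x\<in>sq d. \<Sum>i<r. c i * (cnj (A $$ x) * K i $$ x))"
    unfolding ip_def by (simp add: sum_subtractf)
  also have "(\<Sum>x\<in>sq d. \<Sum>i<r. c i * (cnj (A $$ x) * K i $$ x)) = (\<Sum>i<r. \<Sum>x\<in>sq d. c i * (cnj (A $$ x) * K i $$ x))"
    by (rule sum.swap)
  also have "\<dots> = (\<Sum>i<r. c i * ip d A (K i))"
    unfolding ip_def by (simp add: sum_distrib_left)
  finally show ?thesis .
qed

lemma sum_single:
  fixes r :: nat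
  assumes "j < r" "\<forall>i<r. i \<noteq> j \<longrightarrow> f i = 0"
  shows "(\<Sum>i<r. f i) = (f j :: complex)"
proof -
  have "(\<Sum>i<r. f i) = f j + (\<Sum>i\<in>{..<r} - {j}. f i)"
    using assms(1) by (subst sum.remove[of _ j]) auto
  also have "(\<Sum>i\<in>{..<r} - {j}. f i) = 0" using assms(2) by (intro sum.neutral) auto
  finally show ?thesis by simp
qed

lemma span_lemma:
  fixes t :: real
  assumes orth: "\<forall>i<r. \<forall>j<r. i \<noteq> j \<longrightarrow> ip d (K i) (K j) = 0"
  and nz: "\<forall>i<r. ip d (K i) (K i) \<noteq> 0"
  and dec: "\<forall>x\<in>sq d. \<forall>y\<in>sq d. W r K x y = of_real t * W r1 N x y + of_real (1-t) * W r2 M x y"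
  and t: "0 < t" "t < 1"
  and n: "n < r1"
  shows "\<forall>x\<in>sq d. N n $$ x = (\<Sum>i<r. ip d (K i) (N n) / ip d (K i) (K i) * K i $$ x)"
proof -
  define c where "c i = ip d (K i) (N n) / ip d (K i) (K i)" for i
  define R where "R = mat d d (\<lambda>x. N n $$ x - (\<Sum>i<r. c i * K i $$ x))"
  have Rx: "\<forall>x\<in>sq d. R $$ x = N n $$ x - (\<Sum>i<r. c i * K i $$ x)"
    unfolding R_def by auto
  have ipKR: "ip d (K j) R = 0" if j: "j < r" for j
  proof -
    have "ip d (K j) R = ip d (K j) (N n) - (\<Sum>i<r. c i * ip d (K j) (K i))"
      by (rule ip_lincomb[OF Rx])
    also have "(\<Sum>i<r. c i * ip d (K j) (K i)) = c j * ip d (K j) (K j)"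
      using orth j by (intro sum_single) auto
    also have "c j * ip d (K j) (K j) = ip d (K j) (N n)"
      unfolding c_def using nz j by simp
    finally show ?thesis by simp
  qed
  have ipRK: "ip d R (K j) = 0" if "j < r" for j
    using ipKR[OF that] ip_cnj[of d R "K j"] by simp
  have "Qs d r K R = 0" unfolding Qs_eq using ipRK by simp
  then have z: "\<forall>n<r1. ip d R (N n) = 0" by (rule decomp_zero[OF dec t])
  have "ip d R R = ip d R (N n) - (\<Sum>i<r. c i * ip d R (K i))"
    by (rule ip_lincomb[OF Rx])
  also have "\<dots> = 0" using z n ipRK by simp
  finally have "ip d R R = 0" .
  then have "\<forall>x\<in>sq d. R $$ x = 0" using ip_self_zero by blast
  then show ?thesis using Rx unfolding c_def by simp
qed

definition PP :: "nat \<Rightarrow> (nat \<Rightarrow> complex mat) \<Rightarrow> nat \<Rightarrow> nat \<Rightarrow> nat \<Rightarrow> nat \<Rightarrow> complex" where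
  "PP d K i j p q = (\<Sum>m<d. K i $$ (p,m) * cnj (K j $$ (q,m)))"
definition QQ :: "nat \<Rightarrow> (nat \<Rightarrow> complex mat) \<Rightarrow> nat \<Rightarrow> nat \<Rightarrow> nat \<Rightarrow> nat \<Rightarrow> complex" where
  "QQ d K i j p q = (\<Sum>m<d. cnj (K j $$ (m,p)) * K i $$ (m,q))"

definition pairind :: "nat \<Rightarrow> nat \<Rightarrow> (nat \<Rightarrow> complex mat) \<Rightarrow> bool" where
  "pairind d r K \<longleftrightarrow> (\<forall>G. (\<forall>p<d. \<forall>q<d. (\<Sum>i<r. \<Sum>j<r. G i j * PP d K i j p q) = 0) \<and>
      (\<forall>p<d. \<forall>q<d. (\<Sum>i<r. \<Sum>j<r. G i j * QQ d K i j p q) = 0) \<longrightarrow> (\<forall>i<r. \<forall>j<r. G i j = 0))"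

definition EE :: "nat \<Rightarrow> (nat \<Rightarrow> complex mat) \<Rightarrow> complex mat \<Rightarrow> nat \<Rightarrow> nat \<Rightarrow> nat \<Rightarrow> nat \<Rightarrow> complex" where
  "EE d K X i j p q = (\<Sum>a<d. \<Sum>b<d. K i $$ (p,a) * X $$ (a,b) * cnj (K j $$ (q,b)))"

lemma sum4_swap:
  "(\<Sum>a\<in>A. \<Sum>b\<in>B. \<Sum>i\<in>I. \<Sum>j\<in>J. f a b i j) = (\<Sum>i\<in>I. \<Sum>j\<in>J. \<Sum>a\<in>A. \<Sum>b\<in>B. f a b i j)"
proof -
  have "(\<Sum>a\<in>A. \<Sum>b\<in>B. \<Sum>i\<in>I. \<Sum>j\<in>J. f a b i j) = (\<Sum>a\<in>A. \<Sum>i\<in>I. \<Sum>b\<in>B. \<Sum>j\<in>J. f a b i j)"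
    by (rule sum.cong[OF refl], rule sum.swap)
  also have "\<dots> = (\<Sum>a\<in>A. \<Sum>i\<in>I. \<Sum>j\<in>J. \<Sum>b\<in>B. f a b i j)"
    by (rule sum.cong[OF refl], rule sum.cong[OF refl], rule sum.swap)
  also have "\<dots> = (\<Sum>i\<in>I. \<Sum>a\<in>A. \<Sum>j\<in>J. \<Sum>b\<in>B. f a b i j)"
    by (rule sum.swap)
  also have "\<dots> = (\<Sum>i\<in>I. \<Sum>j\<in>J. \<Sum>a\<in>A. \<Sum>b\<in>B. f a b i j)"
    by (rule sum.cong[OF refl], rule sum.swap)
  finally show ?thesis .
qed

lemma kent_EE: "kent d r K X p q = (\<Sum>i<r. EE d K X i i p q)"
  unfolding kent_def EE_def by simp

lemma EE_one: "EE d K (1\<^sub>m d) i j p q = PP d K i j p q"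
proof -
  have "\<And>a. a < d \<Longrightarrow> (\<Sum>b<d. K i $$ (p,a) * 1\<^sub>m d $$ (a,b) * cnj (K j $$ (q,b)))
     = K i $$ (p,a) * cnj (K j $$ (q,a))"
  proof -
    fix a assume a: "a < d"
    have "(\<Sum>b<d. K i $$ (p,a) * 1\<^sub>m d $$ (a,b) * cnj (K j $$ (q,b)))
       = (\<Sum>b<d. if b = a then K i $$ (p,a) * cnj (K j $$ (q,a)) else 0)"
      using a by (intro sum.cong refl) auto
    also have "\<dots> = K i $$ (p,a) * cnj (K j $$ (q,a))" using a by (simp add: sum.delta')
    finally show "?thesis a" .
  qed
  then show ?thesis unfolding EE_def PP_def by (intro sum.cong refl) auto
qed

lemma EE_unit:
  assumes "y < d" "x < d"
  shows "EE d K (unit_mat d y x) i j m m = K i $$ (m,y) * cnj (K j $$ (m,x))"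
proof -
  have e: "\<And>a. a < d \<Longrightarrow> (\<Sum>b<d. K i $$ (m,a) * unit_mat d y x $$ (a,b) * cnj (K j $$ (m,b)))
      = (if a = y then K i $$ (m,y) * cnj (K j $$ (m,x)) else 0)"
  proof -
    fix a assume a: "a < d"
    have "(\<Sum>b<d. K i $$ (m,a) * unit_mat d y x $$ (a,b) * cnj (K j $$ (m,b)))
       = (\<Sum>b<d. if b = x then (if a = y then K i $$ (m,y) * cnj (K j $$ (m,x)) else 0) else 0)"
      using a by (intro sum.cong refl) auto
    also have "\<dots> = (if a = y then K i $$ (m,y) * cnj (K j $$ (m,x)) else 0)"
      using assms by (simp add: sum.delta)
    finally show "?thesis a" .
  qed
  have "EE d K (unit_mat d y x) i j m m = (\<Sum>a<d. if a = y then K i $$ (m,y) * cnj (K j $$ (m,x)) else 0)"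
    unfolding EE_def by (rule sum.cong[OF refl], rule e, simp)
  then show ?thesis using assms by (simp add: sum.delta)
qed

lemma trace_EE_unit:
  assumes "y < d" "x < d"
  shows "(\<Sum>m<d. EE d K (unit_mat d y x) i j m m) = QQ d K i j x y"
  unfolding QQ_def using assms by (simp add: EE_unit mult.commute)

lemma expand_lincomb:
  assumes "\<forall>x\<in>sq d. Nn $$ x = (\<Sum>i<r. c i * K i $$ x)" "p < d" "q < d"
  shows "(\<Sum>a<d. \<Sum>b<d. Nn $$ (p,a) * X $$ (a,b) * cnj (Nn $$ (q,b)))
       = (\<Sum>i<r. \<Sum>j<r. (c i * cnj (c j)) * EE d K X i j p q)"
proof -
  have "(\<Sum>a<d. \<Sum>b<d. Nn $$ (p,a) * X $$ (a,b) * cnj (Nn $$ (q,b)))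
      = (\<Sum>a<d. \<Sum>b<d. \<Sum>i<r. \<Sum>j<r. (c i * cnj (c j)) * (K i $$ (p,a) * X $$ (a,b) * cnj (K j $$ (q,b))))"
  proof (intro sum.cong refl)
    fix a b assume ab: "a \<in> {..<d}" "b \<in> {..<d}"
    have e1: "Nn $$ (p,a) = (\<Sum>i<r. c i * K i $$ (p,a))" using assms ab by auto
    have e2: "Nn $$ (q,b) = (\<Sum>i<r. c i * K i $$ (q,b))" using assms ab by auto
    show "Nn $$ (p,a) * X $$ (a,b) * cnj (Nn $$ (q,b)) =
        (\<Sum>i<r. \<Sum>j<r. (c i * cnj (c j)) * (K i $$ (p,a) * X $$ (a,b) * cnj (K j $$ (q,b))))"
    proof -
      have "Nn $$ (p,a) * X $$ (a,b) * cnj (Nn $$ (q,b)) =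
         (\<Sum>i<r. c i * K i $$ (p,a) * X $$ (a,b)) * (\<Sum>j<r. cnj (c j) * cnj (K j $$ (q,b)))"
        unfolding e1 e2 cnj_sum by (simp add: sum_distrib_right)
      also have "\<dots> = (\<Sum>i<r. \<Sum>j<r. (c i * K i $$ (p,a) * X $$ (a,b)) * (cnj (c j) * cnj (K j $$ (q,b))))"
        by (rule sum_product)
      also have "\<dots> = (\<Sum>i<r. \<Sum>j<r. (c i * cnj (c j)) * (K i $$ (p,a) * X $$ (a,b) * cnj (K j $$ (q,b))))"
        by (intro sum.cong refl) (simp add: mult_ac)
      finally show ?thesis .
    qed
  qed
  also have "\<dots> = (\<Sum>i<r. \<Sum>j<r. \<Sum>a<d. \<Sum>b<d. (c i * cnj (c j)) * (K i $$ (p,a) * X $$ (a,b) * cnj (K j $$ (q,b))))"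
    by (rule sum4_swap)
  also have "\<dots> = (\<Sum>i<r. \<Sum>j<r. (c i * cnj (c j)) * EE d K X i j p q)"
    unfolding EE_def by (simp add: sum_distrib_left)
  finally show ?thesis .
qed

lemma unit_mat_carrier: "unit_mat d q q' \<in> carrier_mat d d"
  unfolding unit_mat_def by simp

lemma main_step:
  fixes t :: real
  assumes orth: "\<forall>i<r. \<forall>j<r. i \<noteq> j \<longrightarrow> ip d (K i) (K j) = 0"
  and nz: "\<forall>i<r. ip d (K i) (K i) \<noteq> 0"
  and pind: "pairind d r K"
  and dec: "\<forall>X\<in>carrier_mat d d. \<forall>p<d. \<forall>q<d.
      kent d r K X p q = of_real t * kent d r1 N X p q + of_real (1-t) * kent d r2 M X p q"
  and t: "0 < t" "t < 1"
  and hI: "\<forall>p<d. \<forall>q<d. kent d r1 N (1\<^sub>m d) p q = kent d r K (1\<^sub>m d) p q"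
  and htr: "\<forall>X\<in>carrier_mat d d. (\<Sum>m<d. kent d r1 N X m m) = (\<Sum>m<d. kent d r K X m m)"
  shows "\<forall>X\<in>carrier_mat d d. \<forall>p<d. \<forall>q<d. kent d r1 N X p q = kent d r K X p q"
proof -
  have decW: "\<forall>x\<in>sq d. \<forall>y\<in>sq d. W r K x y = of_real t * W r1 N x y + of_real (1-t) * W r2 M x y"
  proof (intro ballI)
    fix x y assume xy: "x \<in> sq d" "y \<in> sq d"
    obtain p q where x: "x = (p,q)" "p < d" "q < d" using xy by auto
    obtain p' q' where y: "y = (p',q')" "p' < d" "q' < d" using xy by auto
    have "kent d r K (unit_mat d q q') p p' = of_real t * kent d r1 N (unit_mat d q q') p p'
       + of_real (1-t) * kent d r2 M (unit_mat d q q') p p'"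
      using dec unit_mat_carrier x y by blast
    then show "W r K x y = of_real t * W r1 N x y + of_real (1-t) * W r2 M x y"
      unfolding x y W_def using x y by (simp add: kent_unit)
  qed
  define cf where "cf n i = ip d (K i) (N n) / ip d (K i) (K i)" for n i
  have span: "\<forall>x\<in>sq d. N n $$ x = (\<Sum>i<r. cf n i * K i $$ x)" if "n < r1" for n
    unfolding cf_def using span_lemma[OF orth nz decW t that] by simp
  define G where "G i j = (\<Sum>n<r1. cf n i * cnj (cf n j))" for i j
  have kN: "kent d r1 N X p q = (\<Sum>i<r. \<Sum>j<r. G i j * EE d K X i j p q)" if pq: "p < d" "q < d" for X p q
  proof -
    have "kent d r1 N X p q = (\<Sum>n<r1. \<Sum>i<r. \<Sum>j<r. (cf n i * cnj (cf n j)) * EE d K X i j p q)"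
      unfolding kent_def using span pq by (intro sum.cong refl expand_lincomb) auto
    also have "\<dots> = (\<Sum>i<r. \<Sum>n<r1. \<Sum>j<r. (cf n i * cnj (cf n j)) * EE d K X i j p q)"
      by (rule sum.swap)
    also have "\<dots> = (\<Sum>i<r. \<Sum>j<r. \<Sum>n<r1. (cf n i * cnj (cf n j)) * EE d K X i j p q)"
      by (rule sum.cong[OF refl], rule sum.swap)
    also have "\<dots> = (\<Sum>i<r. \<Sum>j<r. G i j * EE d K X i j p q)"
      unfolding G_def by (simp add: sum_distrib_right)
    finally show ?thesis .
  qed
  define G' where "G' i j = G i j - (if i = j then 1 else 0)" for i j
  have dsum: "(\<Sum>i<r. \<Sum>j<r. G' i j * f i j) = (\<Sum>i<r. \<Sum>j<r. G i j * f i j) - (\<Sum>i<r. f i i)" for f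
  proof -
    have "(\<Sum>i<r. \<Sum>j<r. G' i j * f i j) = (\<Sum>i<r. (\<Sum>j<r. G i j * f i j) - (\<Sum>j<r. (if i = j then f i j else 0)))"
    proof -
      have "\<And>i j. G' i j * f i j = G i j * f i j - (if i = j then f i j else 0)"
        unfolding G'_def by (simp add: left_diff_distrib)
      then show ?thesis by (simp add: sum_subtractf)
    qed
    also have "\<dots> = (\<Sum>i<r. (\<Sum>j<r. G i j * f i j) - f i i)"
      by (intro sum.cong refl) (simp add: sum.delta)
    also have "\<dots> = (\<Sum>i<r. \<Sum>j<r. G i j * f i j) - (\<Sum>i<r. f i i)"
      by (simp add: sum_subtractf)
    finally show ?thesis .
  qed
  have P0: "\<forall>p<d. \<forall>q<d. (\<Sum>i<r. \<Sum>j<r. G' i j * PP d K i j p q) = 0"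
  proof (intro allI impI)
    fix p q assume pq: "p < d" "q < d"
    have "kent d r1 N (1\<^sub>m d) p q = kent d r K (1\<^sub>m d) p q" using hI pq by blast
    moreover have "kent d r1 N (1\<^sub>m d) p q = (\<Sum>i<r. \<Sum>j<r. G i j * PP d K i j p q)"
      by (simp only: kN[OF pq] EE_one)
    moreover have "kent d r K (1\<^sub>m d) p q = (\<Sum>i<r. PP d K i i p q)"
      by (simp only: kent_EE EE_one)
    ultimately have "(\<Sum>i<r. \<Sum>j<r. G i j * PP d K i j p q) = (\<Sum>i<r. PP d K i i p q)" by simp
    then show "(\<Sum>i<r. \<Sum>j<r. G' i j * PP d K i j p q) = 0" unfolding dsum by simp
  qed
  have Q0: "\<forall>p<d. \<forall>q<d. (\<Sum>i<r. \<Sum>j<r. G' i j * QQ d K i j p q) = 0"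
  proof (intro allI impI)
    fix x y assume xy: "x < d" "y < d"
    have "(\<Sum>m<d. kent d r1 N (unit_mat d y x) m m) = (\<Sum>m<d. kent d r K (unit_mat d y x) m m)"
      using htr unit_mat_carrier by blast
    moreover have "(\<Sum>m<d. kent d r1 N (unit_mat d y x) m m) = (\<Sum>i<r. \<Sum>j<r. G i j * QQ d K i j x y)"
    proof -
      have "(\<Sum>m<d. kent d r1 N (unit_mat d y x) m m) = (\<Sum>m<d. \<Sum>i<r. \<Sum>j<r. G i j * EE d K (unit_mat d y x) i j m m)"
        by (intro sum.cong refl kN) auto
      also have "\<dots> = (\<Sum>i<r. \<Sum>m<d. \<Sum>j<r. G i j * EE d K (unit_mat d y x) i j m m)"
        by (rule sum.swap)
      also have "\<dots> = (\<Sum>i<r. \<Sum>j<r. \<Sum>m<d. G i j * EE d K (unit_mat d y x) i j m m)"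
        by (rule sum.cong[OF refl], rule sum.swap)
      also have "\<dots> = (\<Sum>i<r. \<Sum>j<r. G i j * QQ d K i j x y)"
        using trace_EE_unit[OF xy(2,1)] by (simp add: sum_distrib_left[symmetric])
      finally show ?thesis .
    qed
    moreover have "(\<Sum>m<d. kent d r K (unit_mat d y x) m m) = (\<Sum>i<r. QQ d K i i x y)"
    proof -
      have "(\<Sum>m<d. kent d r K (unit_mat d y x) m m) = (\<Sum>m<d. \<Sum>i<r. EE d K (unit_mat d y x) i i m m)"
        unfolding kent_EE ..
      also have "\<dots> = (\<Sum>i<r. \<Sum>m<d. EE d K (unit_mat d y x) i i m m)" by (rule sum.swap)
      also have "\<dots> = (\<Sum>i<r. QQ d K i i x y)" using trace_EE_unit[OF xy(2,1)] by simp
      finally show ?thesis .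
    qed
    ultimately show "(\<Sum>i<r. \<Sum>j<r. G' i j * QQ d K i j x y) = 0" unfolding dsum by simp
  qed
  have "\<forall>i<r. \<forall>j<r. G' i j = 0" using pind P0 Q0 unfolding pairind_def by blast
  then have Gd: "\<forall>i<r. \<forall>j<r. G i j = (if i = j then 1 else 0)" unfolding G'_def by auto
  show ?thesis
  proof (intro ballI allI impI)
    fix X :: "complex mat" and p q assume "X \<in> carrier_mat d d" and pq: "p < d" "q < d"
    have "kent d r1 N X p q = (\<Sum>i<r. \<Sum>j<r. (if i = j then 1 else 0) * EE d K X i j p q)"
      unfolding kN[OF pq] using Gd by (intro sum.cong refl) auto
    also have "\<dots> = (\<Sum>i<r. EE d K X i i p q)"
    proof (intro sum.cong refl)
      fix i assume "i \<in> {..<r}"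
      have "(\<Sum>j<r. (if i = j then 1 else 0) * EE d K X i j p q) = (\<Sum>j<r. if i = j then EE d K X i j p q else 0)"
        by (intro sum.cong refl) auto
      then show "(\<Sum>j<r. (if i = j then 1 else 0) * EE d K X i j p q) = EE d K X i i p q"
        using \<open>i \<in> {..<r}\<close> by (simp add: sum.delta)
    qed
    finally show "kent d r1 N X p q = kent d r K X p q" unfolding kent_EE .
  qed
qed

lemma mtrace_kent:
  assumes "\<forall>i<r. N i \<in> carrier_mat d d" "X \<in> carrier_mat d d"
  shows "mtrace (kmap d r N X) = (\<Sum>m<d. kent d r N X m m)"
proof -
  have "dim_row (kmap d r N X) = d" using carrier_matD(1)[OF kmap_carrier[OF assms(1)]] .
  then show ?thesis unfolding mtrace_def using kmap_index[OF assms] by simp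
qed

lemma cp_equal:
  fixes s :: real
  assumes Kc: "\<forall>i<r. K i \<in> carrier_mat d d"
  and orth: "\<forall>i<r. \<forall>j<r. i \<noteq> j \<longrightarrow> ip d (K i) (K j) = 0"
  and nz: "\<forall>i<r. ip d (K i) (K i) \<noteq> 0"
  and pind: "pairind d r K"
  and hB: "kmap d r K (1\<^sub>m d) = B"
  and htr: "\<forall>X\<in>carrier_mat d d. mtrace (mat_adjoint A * X) = mtrace (kmap d r K X)"
  and P1: "\<Psi> \<in> CP_set d d A B" and P2: "\<Psi>' \<in> CP_set d d A B"
  and s: "0 < s" "s < 1"
  and eq: "\<forall>X. kmap d r K X = of_real s \<cdot>\<^sub>m \<Psi> X + of_real (1 - s) \<cdot>\<^sub>m \<Psi>' X"
  shows "\<forall>X\<in>carrier_mat d d. \<Psi> X = kmap d r K X"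
proof -
  obtain N r1 where N: "\<forall>i<r1. N i \<in> carrier_mat d d" "\<forall>X \<in> carrier_mat d d. \<Psi> X = kmap d r1 N X"
    by (rule CP_set_kraus[OF P1])
  obtain M r2 where M: "\<forall>i<r2. M i \<in> carrier_mat d d" "\<forall>X \<in> carrier_mat d d. \<Psi>' X = kmap d r2 M X"
    by (rule CP_set_kraus[OF P2])
  have dec: "\<forall>X\<in>carrier_mat d d. \<forall>p<d. \<forall>q<d.
      kent d r K X p q = of_real s * kent d r1 N X p q + of_real (1-s) * kent d r2 M X p q"
  proof (intro ballI allI impI)
    fix X :: "complex mat" and p q assume X: "X \<in> carrier_mat d d" and pq: "p < d" "q < d"
    have N2: "\<Psi> X = kmap d r1 N X" using N(2) X by blast
    have M2: "\<Psi>' X = kmap d r2 M X" using M(2) X by blast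
    have c1: "\<Psi> X \<in> carrier_mat d d" unfolding N2 by (rule kmap_carrier[OF N(1)])
    have c2: "\<Psi>' X \<in> carrier_mat d d" unfolding M2 by (rule kmap_carrier[OF M(1)])
    have "kent d r K X p q = kmap d r K X $$ (p,q)" using kmap_index[OF Kc X pq] by simp
    also have "\<dots> = of_real s * \<Psi> X $$ (p,q) + of_real (1-s) * \<Psi>' X $$ (p,q)"
      using eq pq carrier_matD[OF c1] carrier_matD[OF c2] by simp
    also have "\<dots> = of_real s * kent d r1 N X p q + of_real (1-s) * kent d r2 M X p q"
      unfolding N2 M2 kmap_index[OF N(1) X pq] kmap_index[OF M(1) X pq] ..
    finally show "kent d r K X p q = of_real s * kent d r1 N X p q + of_real (1-s) * kent d r2 M X p q" .
  qed
  have one: "1\<^sub>m d \<in> carrier_mat d d" by simp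
  have hI: "\<forall>p<d. \<forall>q<d. kent d r1 N (1\<^sub>m d) p q = kent d r K (1\<^sub>m d) p q"
  proof (intro allI impI)
    fix p q assume pq: "p < d" "q < d"
    have "kent d r1 N (1\<^sub>m d) p q = \<Psi> (1\<^sub>m d) $$ (p,q)" using N kmap_index[OF N(1) one pq] by simp
    also have "\<dots> = B $$ (p,q)" using P1 unfolding CP_set_def by simp
    also have "\<dots> = kent d r K (1\<^sub>m d) p q" using hB kmap_index[OF Kc one pq] by simp
    finally show "kent d r1 N (1\<^sub>m d) p q = kent d r K (1\<^sub>m d) p q" .
  qed
  have htr2: "\<forall>X\<in>carrier_mat d d. (\<Sum>m<d. kent d r1 N X m m) = (\<Sum>m<d. kent d r K X m m)"
  proof (intro ballI)
    fix X :: "complex mat" assume X: "X \<in> carrier_mat d d"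
    have "(\<Sum>m<d. kent d r1 N X m m) = mtrace (\<Psi> X)" using N X mtrace_kent by simp
    also have "\<dots> = mtrace (mat_adjoint A * X)" using P1 X unfolding CP_set_def by simp
    also have "\<dots> = mtrace (kmap d r K X)" using htr X by simp
    also have "\<dots> = (\<Sum>m<d. kent d r K X m m)" using mtrace_kent[OF Kc X] .
    finally show "(\<Sum>m<d. kent d r1 N X m m) = (\<Sum>m<d. kent d r K X m m)" .
  qed
  have E: "\<forall>X\<in>carrier_mat d d. \<forall>p<d. \<forall>q<d. kent d r1 N X p q = kent d r K X p q"
    by (rule main_step[OF orth nz pind dec s hI htr2])
  show ?thesis
  proof (intro ballI)
    fix X :: "complex mat" assume X: "X \<in> carrier_mat d d"
    have c1: "kmap d r1 N X \<in> carrier_mat d d" using N kmap_carrier by auto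
    have c2: "kmap d r K X \<in> carrier_mat d d" using Kc kmap_carrier by auto
    have "kmap d r1 N X = kmap d r K X"
      using c1 c2 E X kmap_index[OF N(1) X] kmap_index[OF Kc X] by (intro eq_matI) auto
    then show "\<Psi> X = kmap d r K X" using N X by simp
  qed
qed

lemma extreme_general:
  assumes Kc: "\<forall>i<r. K i \<in> carrier_mat d d"
  and orth: "\<forall>i<r. \<forall>j<r. i \<noteq> j \<longrightarrow> ip d (K i) (K j) = 0"
  and nz: "\<forall>i<r. ip d (K i) (K i) \<noteq> 0"
  and pind: "pairind d r K"
  and hB: "kmap d r K (1\<^sub>m d) = B"
  and htr: "\<forall>X\<in>carrier_mat d d. mtrace (mat_adjoint A * X) = mtrace (kmap d r K X)"
  shows "extreme_point_of (kmap d r K) (CP_set d d A B)"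
proof -
  have mem: "kmap d r K \<in> CP_set d d A B"
    unfolding CP_set_def completely_positive_def
  proof (intro CollectI conjI)
    show "\<exists>Ks. (\<forall>K\<in>set Ks. K \<in> carrier_mat d d) \<and>
      (\<forall>X\<in>carrier_mat d d. kmap d r K X = msum d d (\<lambda>K. K * X * mat_adjoint K) Ks)"
      by (rule exI[of _ "map K [0..<r]"]) (auto simp: Kc kmap_def)
    show "\<forall>X. X \<notin> carrier_mat d d \<longrightarrow> kmap d r K X = 0\<^sub>m d d" by (simp add: kmap_def)
    show "kmap d r K (1\<^sub>m d) = B" by (rule hB)
    show "\<forall>X\<in>carrier_mat d d. mtrace (mat_adjoint A * X) = mtrace (kmap d r K X)" by (rule htr)
  qed
  show ?thesis unfolding extreme_point_of_def
  proof (intro conjI mem notI)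
    assume "\<exists>t::real. \<exists>\<Phi>1\<in>CP_set d d A B. \<exists>\<Phi>2\<in>CP_set d d A B. 0 < t \<and> t < 1 \<and> \<Phi>1 \<noteq> \<Phi>2 \<and>
           kmap d r K = (\<lambda>X. complex_of_real t \<cdot>\<^sub>m \<Phi>1 X + complex_of_real (1 - t) \<cdot>\<^sub>m \<Phi>2 X)"
    then obtain t :: real and \<Phi>1 \<Phi>2 where P1: "\<Phi>1 \<in> CP_set d d A B" and P2: "\<Phi>2 \<in> CP_set d d A B"
      and t: "0 < t" "t < 1" and ne: "\<Phi>1 \<noteq> \<Phi>2"
      and eq: "kmap d r K = (\<lambda>X. complex_of_real t \<cdot>\<^sub>m \<Phi>1 X + complex_of_real (1 - t) \<cdot>\<^sub>m \<Phi>2 X)"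
      by blast
    have eq1: "\<forall>X. kmap d r K X = of_real t \<cdot>\<^sub>m \<Phi>1 X + of_real (1 - t) \<cdot>\<^sub>m \<Phi>2 X" using eq by simp
    have e1: "\<forall>X\<in>carrier_mat d d. \<Phi>1 X = kmap d r K X"
      by (rule cp_equal[OF Kc orth nz pind hB htr P1 P2 t eq1])
    have car: "\<Phi> X \<in> carrier_mat d d" if PP: "\<Phi> \<in> CP_set d d A B" for \<Phi> X
    proof (cases "X \<in> carrier_mat d d")
      case True
      obtain N r1 where N: "\<forall>i<r1. N i \<in> carrier_mat d d" "\<forall>X \<in> carrier_mat d d. \<Phi> X = kmap d r1 N X"
        by (rule CP_set_kraus[OF PP])
      then show ?thesis using True kmap_carrier by auto
    next
      case False
      then show ?thesis using PP unfolding CP_set_def by auto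
    qed
    have eq2: "\<forall>X. kmap d r K X = of_real (1 - t) \<cdot>\<^sub>m \<Phi>2 X + of_real (1 - (1 - t)) \<cdot>\<^sub>m \<Phi>1 X"
    proof
      fix X
      have "kmap d r K X = of_real t \<cdot>\<^sub>m \<Phi>1 X + of_real (1 - t) \<cdot>\<^sub>m \<Phi>2 X" using eq1 by simp
      also have "\<dots> = of_real (1 - t) \<cdot>\<^sub>m \<Phi>2 X + of_real t \<cdot>\<^sub>m \<Phi>1 X"
        using car[OF P1, of X] car[OF P2, of X] by (intro comm_add_mat) auto
      finally show "kmap d r K X = of_real (1 - t) \<cdot>\<^sub>m \<Phi>2 X + of_real (1 - (1 - t)) \<cdot>\<^sub>m \<Phi>1 X" by simp
    qed
    have t2: "0 < 1 - t" "1 - t < 1" using t by auto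
    have e2: "\<forall>X\<in>carrier_mat d d. \<Phi>2 X = kmap d r K X"
      by (rule cp_equal[OF Kc orth nz pind hB htr P2 P1 t2 eq2])
    have "\<Phi>1 = \<Phi>2"
    proof
      fix X show "\<Phi>1 X = \<Phi>2 X"
      proof (cases "X \<in> carrier_mat d d")
        case True then show ?thesis using e1 e2 by simp
      next
        case False then show ?thesis using P1 P2 unfolding CP_set_def by auto
      qed
    qed
    then show False using ne by simp
  qed
qed

lemma kron_index:
  assumes "i < dim_row A * dim_row B" "j < dim_col A * dim_col B"
  shows "kron A B $$ (i,j) = A $$ (i div dim_row B, j div dim_col B) * B $$ (i mod dim_row B, j mod dim_col B)"
  unfolding kron_def using assms by simp

lemma kron_dim[simp]: "dim_row (kron A B) = dim_row A * dim_row B" "dim_col (kron A B) = dim_col A * dim_col B"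
  unfolding kron_def by simp_all

lemma choi_carrier:
  assumes Kc: "\<forall>i<r. K i \<in> carrier_mat d d"
  shows "choi_matrix d d (kmap d r K) \<in> carrier_mat (d*d) (d*d)"
proof -
  let ?f = "\<lambda>(r',s). kron (unit_mat d r' s) (kmap d r K (unit_mat d r' s))"
  have uc: "\<And>a b. dim_row (unit_mat d a b) = d" "\<And>a b. dim_col (unit_mat d a b) = d"
    unfolding unit_mat_def by simp_all
  have kc: "\<And>X. dim_row (kmap d r K X) = d" "\<And>X. dim_col (kmap d r K X) = d"
    using kmap_carrier[OF Kc] by (auto dest: carrier_matD)
  have c: "\<forall>x\<in>set (List.product [0..<d] [0..<d]). ?f x \<in> carrier_mat (d*d) (d*d)"
  proof
    fix x assume "x \<in> set (List.product [0..<d] [0..<d])"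
    obtain a b where ab: "x = (a,b)" by (cases x)
    show "?f x \<in> carrier_mat (d*d) (d*d)" unfolding ab by (rule carrier_matI) (simp_all add: uc kc)
  qed
  show ?thesis unfolding choi_matrix_def by (rule msum_carrier[OF c])
qed

lemma choi_index:
  assumes Kc: "\<forall>i<r. K i \<in> carrier_mat d d" and ij: "i < d*d" "j < d*d"
  shows "choi_matrix d d (kmap d r K) $$ (i,j) =
     (\<Sum>n<r. K n $$ (i mod d, i div d) * cnj (K n $$ (j mod d, j div d)))"
proof -
  have d: "0 < d" using ij by (cases d) auto
  have dv: "i div d < d" "j div d < d" "i mod d < d" "j mod d < d"
    using ij d by (auto simp: less_mult_imp_div_less)
  let ?f = "\<lambda>(r',s). kron (unit_mat d r' s) (kmap d r K (unit_mat d r' s))"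
  have uc: "\<And>a b. dim_row (unit_mat d a b) = d" "\<And>a b. dim_col (unit_mat d a b) = d"
    unfolding unit_mat_def by simp_all
  have kc: "\<And>X. dim_row (kmap d r K X) = d" "\<And>X. dim_col (kmap d r K X) = d"
    using kmap_carrier[OF Kc] by (auto dest: carrier_matD)
  have c: "\<forall>x\<in>set (List.product [0..<d] [0..<d]). ?f x \<in> carrier_mat (d*d) (d*d)"
  proof
    fix x assume "x \<in> set (List.product [0..<d] [0..<d])"
    obtain a b where ab: "x = (a,b)" by (cases x)
    show "?f x \<in> carrier_mat (d*d) (d*d)" unfolding ab by (rule carrier_matI) (simp_all add: uc kc)
  qed
  have "choi_matrix d d (kmap d r K) $$ (i,j) = (\<Sum>x\<leftarrow>List.product [0..<d] [0..<d]. ?f x $$ (i,j))"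
    unfolding choi_matrix_def using msum_index[OF c ij] by simp
  also have "\<dots> = (\<Sum>x\<in>{..<d}\<times>{..<d}. ?f x $$ (i,j))"
    by (simp add: sum_list_distinct_conv_sum_set distinct_product atLeast0LessThan)
  also have "\<dots> = (\<Sum>x\<in>{..<d}\<times>{..<d}. if x = (i div d, j div d) then
        kmap d r K (unit_mat d (i div d) (j div d)) $$ (i mod d, j mod d) else 0)"
  proof (intro sum.cong refl)
    fix x assume x: "x \<in> {..<d}\<times>{..<d}"
    obtain a b where ab: "x = (a,b)" "a < d" "b < d" using x by auto
    show "?f x $$ (i,j) = (if x = (i div d, j div d) then
        kmap d r K (unit_mat d (i div d) (j div d)) $$ (i mod d, j mod d) else 0)"
      unfolding ab using ij dv by (simp add: kron_index uc kc)
  qed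
  also have "\<dots> = kmap d r K (unit_mat d (i div d) (j div d)) $$ (i mod d, j mod d)"
    using dv by (simp add: sum.delta')
  also have "\<dots> = kent d r K (unit_mat d (i div d) (j div d)) (i mod d) (j mod d)"
    using kmap_index[OF Kc unit_mat_carrier dv(3,4)] .
  also have "\<dots> = (\<Sum>n<r. K n $$ (i mod d, i div d) * cnj (K n $$ (j mod d, j div d)))"
    using kent_unit[OF dv(1,2)] .
  finally show ?thesis .
qed

lemma rank_upper:
  assumes Kc: "\<forall>i<r. K i \<in> carrier_mat d d"
  shows "vec_space.rank (d*d) (choi_matrix d d (kmap d r K)) \<le> r"
proof -
  define v where "v n i = K n $$ (i mod d, i div d)" for n i
  define S where "S m = mat (d*d) (d*d) (\<lambda>(i,j). \<Sum>n<m. v n i * cnj (v n j))" for m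
  define Mn where "Mn n = mat (d*d) (d*d) (\<lambda>(i,j). v n i * cnj (v n j))" for n
  have Sc: "S m \<in> carrier_mat (d*d) (d*d)" for m unfolding S_def by simp
  have Mc: "Mn m \<in> carrier_mat (d*d) (d*d)" for m unfolding Mn_def by simp
  have SSuc: "S (Suc m) = S m + Mn m" for m
    by (rule eq_matI) (simp_all add: S_def Mn_def)
  have S0: "S 0 = 0\<^sub>m (d*d) (d*d)" by (rule eq_matI) (simp_all add: S_def)
  have "vec_space.rank (d*d) (S m) \<le> m" for m
  proof (induction m)
    case 0 then show ?case unfolding S0 using vec_space.rank_0I by simp
  next
    case (Suc m)
    have "vec_space.rank (d*d) (Mn m) \<le> 1"
      by (rule vec_space.rank_le_1_product_entries[OF Mc, where f = "v m" and g = "\<lambda>j. cnj (v m j)"]) (simp add: Mn_def)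
    then show ?case unfolding SSuc using vec_space.rank_subadditive[OF Sc Mc, of m m] Suc by simp
  qed
  moreover have "choi_matrix d d (kmap d r K) = S r"
  proof (rule eq_matI)
    show "dim_row (choi_matrix d d (kmap d r K)) = dim_row (S r)"
      using carrier_matD[OF choi_carrier[OF Kc]] carrier_matD[OF Sc[of r]] by simp
    show "dim_col (choi_matrix d d (kmap d r K)) = dim_col (S r)"
      using carrier_matD[OF choi_carrier[OF Kc]] carrier_matD[OF Sc[of r]] by simp
    fix i j assume "i < dim_row (S r)" "j < dim_col (S r)"
    then have ij: "i < d*d" "j < d*d" unfolding S_def by simp_all
    show "choi_matrix d d (kmap d r K) $$ (i,j) = S r $$ (i,j)"
      unfolding choi_index[OF Kc ij] S_def v_def using ij by simp
  qed
  ultimately show ?thesis by simp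
qed

lemma rank_lower:
  assumes Kc: "\<forall>i<r. K i \<in> carrier_mat d d"
  and disj: "\<forall>i<r. \<forall>i'<r. i \<noteq> i' \<longrightarrow> (\<forall>p<d. \<forall>q<d. K i $$ (p,q) = 0 \<or> K i' $$ (p,q) = 0)"
  and nzK: "\<forall>i<r. \<exists>p<d. \<exists>q<d. K i $$ (p,q) \<noteq> 0"
  shows "r \<le> vec_space.rank (d*d) (choi_matrix d d (kmap d r K))"
proof -
  define v where "v n i = K n $$ (i mod d, i div d)" for n i
  define C where "C = choi_matrix d d (kmap d r K)"
  have Cc: "C \<in> carrier_mat (d*d) (d*d)" unfolding C_def by (rule choi_carrier[OF Kc])
  have Cij: "C $$ (i,i') = (\<Sum>n<r. v n i * cnj (v n i'))" if "i < d*d" "i' < d*d" for i i'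
    unfolding C_def v_def by (rule choi_index[OF Kc that])
  have ex: "\<exists>i. i < d*d \<and> v n i \<noteq> 0" if n: "n < r" for n
  proof -
    obtain p q where pq: "p < d" "q < d" "K n $$ (p,q) \<noteq> 0" using nzK n by blast
    have "q*d + p < (q+1)*d" using pq by simp
    also have "(q+1)*d \<le> d*d" using pq by (intro mult_le_mono1) simp
    finally have "q*d + p < d*d" .
    moreover have "v n (q*d + p) \<noteq> 0" unfolding v_def using pq by simp
    ultimately show ?thesis by blast
  qed
  define j where "j n = (SOME i. i < d*d \<and> v n i \<noteq> 0)" for n
  have j: "j n < d*d" "v n (j n) \<noteq> 0" if "n < r" for n
    using someI_ex[OF ex[OF that]] unfolding j_def by auto
  have vdisj: "v n i = 0 \<or> v n' i = 0" if "n < r" "n' < r" "n \<noteq> n'" "i < d*d" for n n' i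
  proof -
    have d: "0 < d" using that(4) by (cases d) auto
    have "i mod d < d" "i div d < d" using d that(4) by (auto simp: less_mult_imp_div_less)
    then show ?thesis unfolding v_def using disj that by blast
  qed
  have Cj: "C $$ (j n1, j n2) = (if n1 = n2 then v n1 (j n1) * cnj (v n1 (j n1)) else 0)"
    if n: "n1 < r" "n2 < r" for n1 n2
  proof -
    have "C $$ (j n1, j n2) = (\<Sum>n<r. v n (j n1) * cnj (v n (j n2)))" using Cij j n by simp
    also have "\<dots> = v n1 (j n1) * cnj (v n1 (j n2))"
    proof (rule sum_single[OF n(1)], intro allI impI)
      fix n assume "n < r" "n \<noteq> n1"
      then have "v n (j n1) = 0" using vdisj[of n n1 "j n1"] j[OF n(1)] n by auto
      then show "v n (j n1) * cnj (v n (j n2)) = 0" by simp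
    qed
    also have "\<dots> = (if n1 = n2 then v n1 (j n1) * cnj (v n1 (j n1)) else 0)"
      using vdisj[of n1 n2 "j n2"] j[OF n(2)] n by auto
    finally show ?thesis .
  qed
  have jinj: "inj_on j {..<r}"
  proof (rule inj_onI)
    fix a b assume ab: "a \<in> {..<r}" "b \<in> {..<r}" "j a = j b"
    show "a = b"
    proof (rule ccontr)
      assume "a \<noteq> b"
      then have "v a (j a) = 0 \<or> v b (j a) = 0" using vdisj[of a b "j a"] ab j by auto
      moreover have "v a (j a) \<noteq> 0" using j(2)[of a] ab(1) by simp
      moreover have "v b (j b) \<noteq> 0" using j(2)[of b] ab(2) by simp
      ultimately show False using ab(3) by simp
    qed
  qed
  define J where "J = j ` {..<r}"
  have cardJ: "card J = r" unfolding J_def using card_image[OF jinj] by simp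
  have JJ: "{i. i < d*d \<and> i \<in> J} = J" unfolding J_def using j by auto
  have cJ: "card {i. i < dim_row C \<and> i \<in> J} = r" "card {i. i < dim_col C \<and> i \<in> J} = r"
    using Cc JJ cardJ by (simp_all add: carrier_matD)
  define Sb where "Sb = submatrix C J J"
  have Sbc: "Sb \<in> carrier_mat r r" unfolding Sb_def using cJ
    by (intro carrier_matI) (simp_all add: dim_submatrix)
  have pickJ: "\<exists>n<r. pick J a = j n" if "a < r" for a
  proof -
    have "pick J a \<in> J" using pick_in_set_le[of a J] that cardJ by simp
    then show ?thesis unfolding J_def by auto
  qed
  have Sb_idx: "Sb $$ (a,b) = C $$ (pick J a, pick J b)" if "a < r" "b < r" for a b
    unfolding Sb_def using that cJ by (simp add: submatrix_index)
  have ut: "upper_triangular Sb"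
  proof (rule upper_triangularI)
    fix a b assume ab: "b < a" "a < dim_row Sb"
    then have a: "a < r" "b < r" using Sbc by (auto dest: carrier_matD)
    obtain na where na: "na < r" "pick J a = j na" using pickJ[OF a(1)] by blast
    obtain nb where nb: "nb < r" "pick J b = j nb" using pickJ[OF a(2)] by blast
    have "pick J b < pick J a" using pick_mono_le[of a J b] ab a cardJ by simp
    then have "na \<noteq> nb" using na nb by auto
    then show "Sb $$ (a,b) = 0" using Sb_idx[OF a] na nb Cj by simp
  qed
  have "det Sb = prod_list (diag_mat Sb)" by (rule det_upper_triangular[OF ut Sbc])
  also have "\<dots> \<noteq> 0"
  proof -
    have "0 \<notin> set (diag_mat Sb)"
    proof
      assume "0 \<in> set (diag_mat Sb)"
      then obtain a where a: "a < r" "Sb $$ (a,a) = 0"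
        using Sbc unfolding diag_mat_def by (auto dest: carrier_matD)
      obtain na where na: "na < r" "pick J a = j na" using pickJ[OF a(1)] by blast
      have "Sb $$ (a,a) = v na (j na) * cnj (v na (j na))" using Sb_idx[OF a(1) a(1)] na Cj by simp
      then show False using a j[OF na(1)] by simp
    qed
    then show ?thesis by (simp add: prod_list_zero_iff)
  qed
  finally have "det (submatrix C J J) \<noteq> 0" unfolding Sb_def .
  then have "card {i. i < d*d \<and> i \<in> J} \<le> vec_space.rank (d*d) C"
    by (rule vec_space.rank_gt_minor[OF Cc])
  then show ?thesis using JJ cardJ unfolding C_def by simp
qed

lemma choi_rank_general:
  assumes Kc: "\<forall>i<r. K i \<in> carrier_mat d d"
  and disj: "\<forall>i<r. \<forall>i'<r. i \<noteq> i' \<longrightarrow> (\<forall>p<d. \<forall>q<d. K i $$ (p,q) = 0 \<or> K i' $$ (p,q) = 0)"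
  and nzK: "\<forall>i<r. \<exists>p<d. \<exists>q<d. K i $$ (p,q) \<noteq> 0"
  shows "choi_rank d d (kmap d r K) = r"
  unfolding choi_rank_def using rank_lower[OF Kc disj nzK] rank_upper[OF Kc] by simp

lemma sum_split:
  fixes g :: "nat \<Rightarrow> 'a::comm_monoid_add"
  shows "(\<Sum>m<n*k. g m) = (\<Sum>a<n. \<Sum>b<k. g (a*k + b))"
proof -
  have "(\<Sum>m<n*k. g m) = (\<Sum>a<n. sum g {a*k..<a*k+k})" by (rule sum.nat_group[symmetric])
  also have "\<dots> = (\<Sum>a<n. \<Sum>b<k. g (a*k + b))"
  proof (rule sum.cong[OF refl])
    fix a
    have "sum g {0 + a*k..<k + a*k} = (\<Sum>b\<in>{0..<k}. g (b + a*k))" by (rule sum.shift_bounds_nat_ivl)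
    then show "sum g {a*k..<a*k+k} = (\<Sum>b<k. g (a*k + b))"
      by (simp add: atLeast0LessThan add.commute)
  qed
  finally show ?thesis .
qed

definition kf :: "nat \<Rightarrow> (nat \<Rightarrow> complex mat) \<Rightarrow> (nat \<Rightarrow> complex mat) \<Rightarrow> nat \<Rightarrow> complex mat" where
  "kf r2 A L \<alpha> = kron (A (\<alpha> div r2)) (L (\<alpha> mod r2))"

lemma divmod_lt:
  fixes a t r1 r2 :: nat
  assumes "a < r1" "t < r2"
  shows "a*r2 + t < r1*r2" "(a*r2+t) div r2 = a" "(a*r2+t) mod r2 = t"
proof -
  have "a*r2 + t < a*r2 + r2" using assms by simp
  also have "\<dots> = (a+1)*r2" by simp
  also have "\<dots> \<le> r1*r2" using assms by (intro mult_le_mono1) simp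
  finally show "a*r2 + t < r1*r2" .
  show "(a*r2+t) div r2 = a" "(a*r2+t) mod r2 = t" using assms by auto
qed

lemma kf_carrier:
  assumes Ac: "\<forall>a<r1. A a \<in> carrier_mat d1 d1" and Lc: "\<forall>t<r2. L t \<in> carrier_mat d2 d2"
  and al: "\<alpha> < r1*r2"
  shows "kf r2 A L \<alpha> \<in> carrier_mat (d1*d2) (d1*d2)"
proof -
  have r2: "0 < r2" using al by (cases r2) auto
  have "\<alpha> div r2 < r1" using al r2 by (simp add: less_mult_imp_div_less)
  moreover have "\<alpha> mod r2 < r2" using r2 by simp
  ultimately have "A (\<alpha> div r2) \<in> carrier_mat d1 d1" "L (\<alpha> mod r2) \<in> carrier_mat d2 d2" using Ac Lc by auto
  then show ?thesis unfolding kf_def by (intro carrier_matI) (simp_all add: carrier_matD)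
qed

lemma kf_index:
  assumes Ac: "\<forall>a<r1. A a \<in> carrier_mat d1 d1" and Lc: "\<forall>t<r2. L t \<in> carrier_mat d2 d2"
  and at: "a < r1" "t < r2" and IJ: "I < d1" "J < d1" and xy: "x < d2" "y < d2"
  shows "kf r2 A L (a*r2+t) $$ (I*d2+x, J*d2+y) = A a $$ (I,J) * L t $$ (x,y)"
proof -
  have c: "A a \<in> carrier_mat d1 d1" "L t \<in> carrier_mat d2 d2" using Ac Lc at by auto
  have "I*d2+x < d1*d2" "J*d2+y < d1*d2" using divmod_lt IJ xy by auto
  then show ?thesis unfolding kf_def using divmod_lt[OF at] divmod_lt[OF IJ(1) xy(1)] divmod_lt[OF IJ(2) xy(2)] c
    by (simp add: kron_index carrier_matD)
qed

lemma PP_kf: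
  assumes Ac: "\<forall>a<r1. A a \<in> carrier_mat d1 d1" and Lc: "\<forall>t<r2. L t \<in> carrier_mat d2 d2"
  and ab: "a < r1" "b < r1" and ts: "t < r2" "s < r2" and IJ: "I < d1" "J < d1" and xy: "x < d2" "y < d2"
  shows "PP (d1*d2) (kf r2 A L) (a*r2+t) (b*r2+s) (I*d2+x) (J*d2+y) = PP d1 A a b I J * PP d2 L t s x y"
proof -
  have "PP (d1*d2) (kf r2 A L) (a*r2+t) (b*r2+s) (I*d2+x) (J*d2+y) =
    (\<Sum>m1<d1. \<Sum>m2<d2. kf r2 A L (a*r2+t) $$ (I*d2+x, m1*d2+m2) * cnj (kf r2 A L (b*r2+s) $$ (J*d2+y, m1*d2+m2)))"
    unfolding PP_def by (rule sum_split)
  also have "\<dots> = (\<Sum>m1<d1. \<Sum>m2<d2. (A a $$ (I,m1) * cnj (A b $$ (J,m1))) * (L t $$ (x,m2) * cnj (L s $$ (y,m2))))"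
    by (intro sum.cong refl) (simp add: kf_index[OF Ac Lc] ab ts IJ xy mult_ac)
  also have "\<dots> = PP d1 A a b I J * PP d2 L t s x y"
    unfolding PP_def by (simp add: sum_product)
  finally show ?thesis .
qed

lemma QQ_kf:
  assumes Ac: "\<forall>a<r1. A a \<in> carrier_mat d1 d1" and Lc: "\<forall>t<r2. L t \<in> carrier_mat d2 d2"
  and ab: "a < r1" "b < r1" and ts: "t < r2" "s < r2" and IJ: "I < d1" "J < d1" and xy: "x < d2" "y < d2"
  shows "QQ (d1*d2) (kf r2 A L) (a*r2+t) (b*r2+s) (I*d2+x) (J*d2+y) = QQ d1 A a b I J * QQ d2 L t s x y"
proof -
  have "QQ (d1*d2) (kf r2 A L) (a*r2+t) (b*r2+s) (I*d2+x) (J*d2+y) =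
    (\<Sum>m1<d1. \<Sum>m2<d2. cnj (kf r2 A L (b*r2+s) $$ (m1*d2+m2, I*d2+x)) * kf r2 A L (a*r2+t) $$ (m1*d2+m2, J*d2+y))"
    unfolding QQ_def by (rule sum_split)
  also have "\<dots> = (\<Sum>m1<d1. \<Sum>m2<d2. (cnj (A b $$ (m1,I)) * A a $$ (m1,J)) * (cnj (L s $$ (m2,x)) * L t $$ (m2,y)))"
    by (intro sum.cong refl) (simp add: kf_index[OF Ac Lc] ab ts IJ xy mult_ac)
  also have "\<dots> = QQ d1 A a b I J * QQ d2 L t s x y"
    unfolding QQ_def by (simp add: sum_product)
  finally show ?thesis .
qed

definition dbasisP :: "nat \<Rightarrow> nat \<Rightarrow> (nat \<Rightarrow> complex mat) \<Rightarrow> bool" where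
  "dbasisP d r K \<longleftrightarrow> (\<forall>z. (\<forall>p<d. \<forall>q<d. (\<Sum>i<r. \<Sum>j<r. z i j * PP d K i j p q) = 0) \<longrightarrow> (\<forall>i<r. \<forall>j<r. z i j = 0))"
definition dbasisQ :: "nat \<Rightarrow> nat \<Rightarrow> (nat \<Rightarrow> complex mat) \<Rightarrow> bool" where
  "dbasisQ d r K \<longleftrightarrow> (\<forall>z. (\<forall>p<d. \<forall>q<d. (\<Sum>i<r. \<Sum>j<r. z i j * QQ d K i j p q) = 0) \<longrightarrow> (\<forall>i<r. \<forall>j<r. z i j = 0))"

lemma bigsum_split:
  fixes r1 r2 :: nat
  shows "(\<Sum>\<alpha><r1*r2. \<Sum>\<beta><r1*r2. H \<alpha> \<beta>) = (\<Sum>a<r1. \<Sum>t<r2. \<Sum>b<r1. \<Sum>s<r2. (H (a*r2+t) (b*r2+s) :: complex))"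
proof -
  have "(\<Sum>\<alpha><r1*r2. \<Sum>\<beta><r1*r2. H \<alpha> \<beta>) = (\<Sum>a<r1. \<Sum>t<r2. \<Sum>\<beta><r1*r2. H (a*r2+t) \<beta>)"
    using sum_split[of "\<lambda>\<alpha>. (\<Sum>\<beta><r1*r2. H \<alpha> \<beta>)" r1 r2] by simp
  also have "\<dots> = (\<Sum>a<r1. \<Sum>t<r2. \<Sum>b<r1. \<Sum>s<r2. H (a*r2+t) (b*r2+s))"
  proof (rule sum.cong[OF refl])
    fix a
    show "(\<Sum>t<r2. \<Sum>\<beta><r1*r2. H (a*r2+t) \<beta>) = (\<Sum>t<r2. \<Sum>b<r1. \<Sum>s<r2. H (a*r2+t) (b*r2+s))"
    proof (rule sum.cong[OF refl])
      fix t
      show "(\<Sum>\<beta><r1*r2. H (a*r2+t) \<beta>) = (\<Sum>b<r1. \<Sum>s<r2. H (a*r2+t) (b*r2+s))"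
        using sum_split[of "H (a*r2+t)" r1 r2] by simp
    qed
  qed
  finally show ?thesis .
qed

lemma rearr1:
  fixes r1 r2 :: nat
  shows "(\<Sum>t<r2. \<Sum>s<r2. (\<Sum>a<r1. \<Sum>b<r1. F a t b s * P a b) * Q t s) =
   (\<Sum>a<r1. \<Sum>t<r2. \<Sum>b<r1. \<Sum>s<r2. F a t b s * (P a b * Q t s) :: complex)"
proof -
  have "(\<Sum>t<r2. \<Sum>s<r2. (\<Sum>a<r1. \<Sum>b<r1. F a t b s * P a b) * Q t s) =
     (\<Sum>t<r2. \<Sum>s<r2. \<Sum>a<r1. \<Sum>b<r1. F a t b s * (P a b * Q t s))"
    by (simp add: sum_distrib_right mult.assoc)
  also have "\<dots> = (\<Sum>a<r1. \<Sum>b<r1. \<Sum>t<r2. \<Sum>s<r2. F a t b s * (P a b * Q t s))"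
    by (rule sum4_swap)
  also have "\<dots> = (\<Sum>a<r1. \<Sum>t<r2. \<Sum>b<r1. \<Sum>s<r2. F a t b s * (P a b * Q t s))"
    by (rule sum.cong[OF refl], rule sum.swap)
  finally show ?thesis .
qed

lemma rearr2:
  fixes r1 r2 :: nat
  shows "(\<Sum>a<r1. \<Sum>b<r1. (\<Sum>t<r2. \<Sum>s<r2. F a t b s * Q t s) * P a b) =
   (\<Sum>a<r1. \<Sum>t<r2. \<Sum>b<r1. \<Sum>s<r2. F a t b s * (P a b * Q t s) :: complex)"
proof -
  have "(\<Sum>a<r1. \<Sum>b<r1. (\<Sum>t<r2. \<Sum>s<r2. F a t b s * Q t s) * P a b) =
     (\<Sum>a<r1. \<Sum>b<r1. \<Sum>t<r2. \<Sum>s<r2. F a t b s * (P a b * Q t s))"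
    by (simp add: sum_distrib_left sum_distrib_right mult_ac)
  also have "\<dots> = (\<Sum>a<r1. \<Sum>t<r2. \<Sum>b<r1. \<Sum>s<r2. F a t b s * (P a b * Q t s))"
    by (rule sum.cong[OF refl], rule sum.swap)
  finally show ?thesis .
qed

lemma kf_PPsum:
  assumes Ac: "\<forall>a<r1. A a \<in> carrier_mat d1 d1" and Lc: "\<forall>t<r2. L t \<in> carrier_mat d2 d2"
  and IJ: "I < d1" "J < d1" and xy: "x < d2" "y < d2"
  shows "(\<Sum>\<alpha><r1*r2. \<Sum>\<beta><r1*r2. G \<alpha> \<beta> * PP (d1*d2) (kf r2 A L) \<alpha> \<beta> (I*d2+x) (J*d2+y)) =
    (\<Sum>a<r1. \<Sum>t<r2. \<Sum>b<r1. \<Sum>s<r2. G (a*r2+t) (b*r2+s) * (PP d1 A a b I J * PP d2 L t s x y))"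
  unfolding bigsum_split using PP_kf[OF Ac Lc _ _ _ _ IJ xy] by (intro sum.cong refl) auto

lemma kf_QQsum:
  assumes Ac: "\<forall>a<r1. A a \<in> carrier_mat d1 d1" and Lc: "\<forall>t<r2. L t \<in> carrier_mat d2 d2"
  and IJ: "I < d1" "J < d1" and xy: "x < d2" "y < d2"
  shows "(\<Sum>\<alpha><r1*r2. \<Sum>\<beta><r1*r2. G \<alpha> \<beta> * QQ (d1*d2) (kf r2 A L) \<alpha> \<beta> (I*d2+x) (J*d2+y)) =
    (\<Sum>a<r1. \<Sum>t<r2. \<Sum>b<r1. \<Sum>s<r2. G (a*r2+t) (b*r2+s) * (QQ d1 A a b I J * QQ d2 L t s x y))"
  unfolding bigsum_split using QQ_kf[OF Ac Lc _ _ _ _ IJ xy] by (intro sum.cong refl) auto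

lemma idx_bound: "i < d1 \<Longrightarrow> x < d2 \<Longrightarrow> i*d2 + x < d1*(d2::nat)"
  using divmod_lt(1) by blast

lemma tensor1:
  assumes Ac: "\<forall>a<r1. A a \<in> carrier_mat d1 d1" and Lc: "\<forall>t<r2. L t \<in> carrier_mat d2 d2"
  and pA: "pairind d1 r1 A" and dP: "dbasisP d2 r2 L" and dQ: "dbasisQ d2 r2 L"
  shows "pairind (d1*d2) (r1*r2) (kf r2 A L)"
  unfolding pairind_def
proof (rule allI, rule impI)
  fix G assume H: "(\<forall>p<d1*d2. \<forall>q<d1*d2. (\<Sum>i<r1*r2. \<Sum>j<r1*r2. G i j * PP (d1*d2) (kf r2 A L) i j p q) = 0) \<and>
      (\<forall>p<d1*d2. \<forall>q<d1*d2. (\<Sum>i<r1*r2. \<Sum>j<r1*r2. G i j * QQ (d1*d2) (kf r2 A L) i j p q) = 0)"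
  have key: "G (a*r2+t0) (b*r2+s0) = 0" if ab: "a < r1" "b < r1" and ts: "t0 < r2" "s0 < r2" for a b t0 s0
  proof -
    define g where "g a b = G (a*r2+t0) (b*r2+s0)" for a b
    have gP: "\<forall>I<d1. \<forall>J<d1. (\<Sum>a<r1. \<Sum>b<r1. g a b * PP d1 A a b I J) = 0"
    proof (intro allI impI)
      fix I J assume IJ: "I < d1" "J < d1"
      define z where "z t s = (\<Sum>a<r1. \<Sum>b<r1. G (a*r2+t) (b*r2+s) * PP d1 A a b I J)" for t s
      have "\<forall>x<d2. \<forall>y<d2. (\<Sum>t<r2. \<Sum>s<r2. z t s * PP d2 L t s x y) = 0"
      proof (intro allI impI)
        fix x y assume xy: "x < d2" "y < d2"
        have "(\<Sum>t<r2. \<Sum>s<r2. z t s * PP d2 L t s x y) =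
          (\<Sum>\<alpha><r1*r2. \<Sum>\<beta><r1*r2. G \<alpha> \<beta> * PP (d1*d2) (kf r2 A L) \<alpha> \<beta> (I*d2+x) (J*d2+y))"
          unfolding z_def kf_PPsum[OF Ac Lc IJ xy] by (rule rearr1)
        also have "\<dots> = 0" using H idx_bound IJ xy by blast
        finally show "(\<Sum>t<r2. \<Sum>s<r2. z t s * PP d2 L t s x y) = 0" .
      qed
      then have "z t0 s0 = 0" using dP ts unfolding dbasisP_def by blast
      then show "(\<Sum>a<r1. \<Sum>b<r1. g a b * PP d1 A a b I J) = 0" unfolding z_def g_def .
    qed
    have gQ: "\<forall>I<d1. \<forall>J<d1. (\<Sum>a<r1. \<Sum>b<r1. g a b * QQ d1 A a b I J) = 0"
    proof (intro allI impI)
      fix I J assume IJ: "I < d1" "J < d1"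
      define z where "z t s = (\<Sum>a<r1. \<Sum>b<r1. G (a*r2+t) (b*r2+s) * QQ d1 A a b I J)" for t s
      have "\<forall>x<d2. \<forall>y<d2. (\<Sum>t<r2. \<Sum>s<r2. z t s * QQ d2 L t s x y) = 0"
      proof (intro allI impI)
        fix x y assume xy: "x < d2" "y < d2"
        have "(\<Sum>t<r2. \<Sum>s<r2. z t s * QQ d2 L t s x y) =
          (\<Sum>\<alpha><r1*r2. \<Sum>\<beta><r1*r2. G \<alpha> \<beta> * QQ (d1*d2) (kf r2 A L) \<alpha> \<beta> (I*d2+x) (J*d2+y))"
          unfolding z_def kf_QQsum[OF Ac Lc IJ xy] by (rule rearr1)
        also have "\<dots> = 0" using H idx_bound IJ xy by blast
        finally show "(\<Sum>t<r2. \<Sum>s<r2. z t s * QQ d2 L t s x y) = 0" .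
      qed
      then have "z t0 s0 = 0" using dQ ts unfolding dbasisQ_def by blast
      then show "(\<Sum>a<r1. \<Sum>b<r1. g a b * QQ d1 A a b I J) = 0" unfolding z_def g_def .
    qed
    have "\<forall>a<r1. \<forall>b<r1. g a b = 0" using pA gP gQ unfolding pairind_def by blast
    then show ?thesis using ab unfolding g_def by blast
  qed
  show "\<forall>i<r1*r2. \<forall>j<r1*r2. G i j = 0"
  proof (intro allI impI)
    fix i j assume ij: "i < r1*r2" "j < r1*r2"
    have r2: "0 < r2" using ij by (cases r2) auto
    have "i div r2 < r1" "j div r2 < r1" using ij r2 by (auto simp: less_mult_imp_div_less)
    moreover have "i mod r2 < r2" "j mod r2 < r2" using r2 by auto
    ultimately have "G ((i div r2)*r2 + i mod r2) ((j div r2)*r2 + j mod r2) = 0" using key by blast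
    then show "G i j = 0" by simp
  qed
qed

lemma tensor2:
  assumes Bc: "\<forall>a<r1. B a \<in> carrier_mat d1 d1" and Cc: "\<forall>t<r2. C t \<in> carrier_mat d2 d2"
  and dP: "dbasisP d1 r1 B" and dQ: "dbasisQ d1 r1 B" and pC: "pairind d2 r2 C"
  shows "pairind (d1*d2) (r1*r2) (kf r2 B C)"
  unfolding pairind_def
proof (rule allI, rule impI)
  fix G assume H: "(\<forall>p<d1*d2. \<forall>q<d1*d2. (\<Sum>i<r1*r2. \<Sum>j<r1*r2. G i j * PP (d1*d2) (kf r2 B C) i j p q) = 0) \<and>
      (\<forall>p<d1*d2. \<forall>q<d1*d2. (\<Sum>i<r1*r2. \<Sum>j<r1*r2. G i j * QQ (d1*d2) (kf r2 B C) i j p q) = 0)"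
  have key: "G (a0*r2+t) (b0*r2+s) = 0" if ab: "a0 < r1" "b0 < r1" and ts: "t < r2" "s < r2" for a0 b0 t s
  proof -
    define g where "g t s = G (a0*r2+t) (b0*r2+s)" for t s
    have gP: "\<forall>x<d2. \<forall>y<d2. (\<Sum>t<r2. \<Sum>s<r2. g t s * PP d2 C t s x y) = 0"
    proof (intro allI impI)
      fix x y assume xy: "x < d2" "y < d2"
      define z where "z a b = (\<Sum>t<r2. \<Sum>s<r2. G (a*r2+t) (b*r2+s) * PP d2 C t s x y)" for a b
      have "\<forall>I<d1. \<forall>J<d1. (\<Sum>a<r1. \<Sum>b<r1. z a b * PP d1 B a b I J) = 0"
      proof (intro allI impI)
        fix I J assume IJ: "I < d1" "J < d1"
        have "(\<Sum>a<r1. \<Sum>b<r1. z a b * PP d1 B a b I J) =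
          (\<Sum>\<alpha><r1*r2. \<Sum>\<beta><r1*r2. G \<alpha> \<beta> * PP (d1*d2) (kf r2 B C) \<alpha> \<beta> (I*d2+x) (J*d2+y))"
          unfolding z_def kf_PPsum[OF Bc Cc IJ xy] by (rule rearr2)
        also have "\<dots> = 0" using H idx_bound IJ xy by blast
        finally show "(\<Sum>a<r1. \<Sum>b<r1. z a b * PP d1 B a b I J) = 0" .
      qed
      then have "z a0 b0 = 0" using dP ab unfolding dbasisP_def by blast
      then show "(\<Sum>t<r2. \<Sum>s<r2. g t s * PP d2 C t s x y) = 0" unfolding z_def g_def .
    qed
    have gQ: "\<forall>x<d2. \<forall>y<d2. (\<Sum>t<r2. \<Sum>s<r2. g t s * QQ d2 C t s x y) = 0"
    proof (intro allI impI)
      fix x y assume xy: "x < d2" "y < d2"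
      define z where "z a b = (\<Sum>t<r2. \<Sum>s<r2. G (a*r2+t) (b*r2+s) * QQ d2 C t s x y)" for a b
      have "\<forall>I<d1. \<forall>J<d1. (\<Sum>a<r1. \<Sum>b<r1. z a b * QQ d1 B a b I J) = 0"
      proof (intro allI impI)
        fix I J assume IJ: "I < d1" "J < d1"
        have "(\<Sum>a<r1. \<Sum>b<r1. z a b * QQ d1 B a b I J) =
          (\<Sum>\<alpha><r1*r2. \<Sum>\<beta><r1*r2. G \<alpha> \<beta> * QQ (d1*d2) (kf r2 B C) \<alpha> \<beta> (I*d2+x) (J*d2+y))"
          unfolding z_def kf_QQsum[OF Bc Cc IJ xy] by (rule rearr2)
        also have "\<dots> = 0" using H idx_bound IJ xy by blast
        finally show "(\<Sum>a<r1. \<Sum>b<r1. z a b * QQ d1 B a b I J) = 0" .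
      qed
      then have "z a0 b0 = 0" using dQ ab unfolding dbasisQ_def by blast
      then show "(\<Sum>t<r2. \<Sum>s<r2. g t s * QQ d2 C t s x y) = 0" unfolding z_def g_def .
    qed
    have "\<forall>t<r2. \<forall>s<r2. g t s = 0" using pC gP gQ unfolding pairind_def by blast
    then show ?thesis using ts unfolding g_def by blast
  qed
  show "\<forall>i<r1*r2. \<forall>j<r1*r2. G i j = 0"
  proof (intro allI impI)
    fix i j assume ij: "i < r1*r2" "j < r1*r2"
    have r2: "0 < r2" using ij by (cases r2) auto
    have "i div r2 < r1" "j div r2 < r1" using ij r2 by (auto simp: less_mult_imp_div_less)
    moreover have "i mod r2 < r2" "j mod r2 < r2" using r2 by auto
    ultimately have "G ((i div r2)*r2 + i mod r2) ((j div r2)*r2 + j mod r2) = 0" using key by blast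
    then show "G i j = 0" by simp
  qed
qed

definition disjs :: "nat \<Rightarrow> nat \<Rightarrow> (nat \<Rightarrow> complex mat) \<Rightarrow> bool" where
  "disjs d r K \<longleftrightarrow> (\<forall>i<r. \<forall>i'<r. i \<noteq> i' \<longrightarrow> (\<forall>p<d. \<forall>q<d. K i $$ (p,q) = 0 \<or> K i' $$ (p,q) = 0))"
definition nzs :: "nat \<Rightarrow> nat \<Rightarrow> (nat \<Rightarrow> complex mat) \<Rightarrow> bool" where
  "nzs d r K \<longleftrightarrow> (\<forall>i<r. \<exists>p<d. \<exists>q<d. K i $$ (p,q) \<noteq> 0)"

lemma decomp_idx:
  fixes i n k :: nat
  assumes "i < n*k"
  shows "i div k < n" "i mod k < k" "i = (i div k)*k + i mod k"
proof -
  have k: "0 < k" using assms by (cases k) auto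
  show "i div k < n" using assms k by (simp add: less_mult_imp_div_less)
  show "i mod k < k" using k by simp
  show "i = (i div k)*k + i mod k" by simp
qed

lemma kf_disjs:
  assumes Ac: "\<forall>a<r1. A a \<in> carrier_mat d1 d1" and Lc: "\<forall>t<r2. L t \<in> carrier_mat d2 d2"
  and dA: "disjs d1 r1 A" and dL: "disjs d2 r2 L"
  shows "disjs (d1*d2) (r1*r2) (kf r2 A L)"
  unfolding disjs_def
proof (intro allI impI)
  fix \<alpha> \<beta> p q assume h: "\<alpha> < r1*r2" "\<beta> < r1*r2" "\<alpha> \<noteq> \<beta>" "p < d1*d2" "q < d1*d2"
  note a = decomp_idx[OF h(1)] and b = decomp_idx[OF h(2)] and pp = decomp_idx[OF h(4)] and qq = decomp_idx[OF h(5)]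
  have ea: "kf r2 A L \<alpha> $$ (p,q) = A (\<alpha> div r2) $$ (p div d2, q div d2) * L (\<alpha> mod r2) $$ (p mod d2, q mod d2)"
    using kf_index[OF Ac Lc a(1,2) pp(1) qq(1) pp(2) qq(2)] a(3) pp(3) qq(3) by simp
  have eb: "kf r2 A L \<beta> $$ (p,q) = A (\<beta> div r2) $$ (p div d2, q div d2) * L (\<beta> mod r2) $$ (p mod d2, q mod d2)"
    using kf_index[OF Ac Lc b(1,2) pp(1) qq(1) pp(2) qq(2)] b(3) pp(3) qq(3) by simp
  have "\<alpha> div r2 \<noteq> \<beta> div r2 \<or> \<alpha> mod r2 \<noteq> \<beta> mod r2" using h(3) a(3) b(3) by metis
  then show "kf r2 A L \<alpha> $$ (p,q) = 0 \<or> kf r2 A L \<beta> $$ (p,q) = 0"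
  proof
    assume "\<alpha> div r2 \<noteq> \<beta> div r2"
    then have "A (\<alpha> div r2) $$ (p div d2, q div d2) = 0 \<or> A (\<beta> div r2) $$ (p div d2, q div d2) = 0"
      using dA a(1) b(1) pp(1) qq(1) unfolding disjs_def by blast
    then show ?thesis using ea eb by auto
  next
    assume "\<alpha> mod r2 \<noteq> \<beta> mod r2"
    then have "L (\<alpha> mod r2) $$ (p mod d2, q mod d2) = 0 \<or> L (\<beta> mod r2) $$ (p mod d2, q mod d2) = 0"
      using dL a(2) b(2) pp(2) qq(2) unfolding disjs_def by blast
    then show ?thesis using ea eb by auto
  qed
qed

lemma kf_nzs:
  assumes Ac: "\<forall>a<r1. A a \<in> carrier_mat d1 d1" and Lc: "\<forall>t<r2. L t \<in> carrier_mat d2 d2"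
  and nA: "nzs d1 r1 A" and nL: "nzs d2 r2 L"
  shows "nzs (d1*d2) (r1*r2) (kf r2 A L)"
  unfolding nzs_def
proof (intro allI impI)
  fix \<alpha> assume h: "\<alpha> < r1*r2"
  note a = decomp_idx[OF h]
  obtain I J where IJ: "I < d1" "J < d1" "A (\<alpha> div r2) $$ (I,J) \<noteq> 0" using nA a(1) unfolding nzs_def by blast
  obtain x y where xy: "x < d2" "y < d2" "L (\<alpha> mod r2) $$ (x,y) \<noteq> 0" using nL a(2) unfolding nzs_def by blast
  have "kf r2 A L \<alpha> $$ (I*d2+x, J*d2+y) = A (\<alpha> div r2) $$ (I,J) * L (\<alpha> mod r2) $$ (x,y)"
    using kf_index[OF Ac Lc a(1,2) IJ(1,2) xy(1,2)] a(3) by simp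
  then have "kf r2 A L \<alpha> $$ (I*d2+x, J*d2+y) \<noteq> 0" using IJ xy by simp
  moreover have "I*d2+x < d1*d2" "J*d2+y < d1*d2" using idx_bound IJ xy by auto
  ultimately show "\<exists>p<d1*d2. \<exists>q<d1*d2. kf r2 A L \<alpha> $$ (p,q) \<noteq> 0" by blast
qed

lemma kf_PPdiag:
  assumes Ac: "\<forall>a<r1. A a \<in> carrier_mat d1 d1" and Lc: "\<forall>t<r2. L t \<in> carrier_mat d2 d2"
  and IJ: "I < d1" "J < d1" and xy: "x < d2" "y < d2"
  shows "(\<Sum>\<alpha><r1*r2. PP (d1*d2) (kf r2 A L) \<alpha> \<alpha> (I*d2+x) (J*d2+y)) =
     (\<Sum>a<r1. PP d1 A a a I J) * (\<Sum>t<r2. PP d2 L t t x y)"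
proof -
  have "(\<Sum>\<alpha><r1*r2. PP (d1*d2) (kf r2 A L) \<alpha> \<alpha> (I*d2+x) (J*d2+y)) =
      (\<Sum>a<r1. \<Sum>t<r2. PP (d1*d2) (kf r2 A L) (a*r2+t) (a*r2+t) (I*d2+x) (J*d2+y))"
    by (rule sum_split)
  also have "\<dots> = (\<Sum>a<r1. \<Sum>t<r2. PP d1 A a a I J * PP d2 L t t x y)"
    using PP_kf[OF Ac Lc _ _ _ _ IJ xy] by (intro sum.cong refl) auto
  also have "\<dots> = (\<Sum>a<r1. PP d1 A a a I J) * (\<Sum>t<r2. PP d2 L t t x y)"
    by (simp add: sum_product)
  finally show ?thesis .
qed

lemma kf_QQdiag:
  assumes Ac: "\<forall>a<r1. A a \<in> carrier_mat d1 d1" and Lc: "\<forall>t<r2. L t \<in> carrier_mat d2 d2"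
  and IJ: "I < d1" "J < d1" and xy: "x < d2" "y < d2"
  shows "(\<Sum>\<alpha><r1*r2. QQ (d1*d2) (kf r2 A L) \<alpha> \<alpha> (I*d2+x) (J*d2+y)) =
     (\<Sum>a<r1. QQ d1 A a a I J) * (\<Sum>t<r2. QQ d2 L t t x y)"
proof -
  have "(\<Sum>\<alpha><r1*r2. QQ (d1*d2) (kf r2 A L) \<alpha> \<alpha> (I*d2+x) (J*d2+y)) =
      (\<Sum>a<r1. \<Sum>t<r2. QQ (d1*d2) (kf r2 A L) (a*r2+t) (a*r2+t) (I*d2+x) (J*d2+y))"
    by (rule sum_split)
  also have "\<dots> = (\<Sum>a<r1. \<Sum>t<r2. QQ d1 A a a I J * QQ d2 L t t x y)"
    using QQ_kf[OF Ac Lc _ _ _ _ IJ xy] by (intro sum.cong refl) auto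
  also have "\<dots> = (\<Sum>a<r1. QQ d1 A a a I J) * (\<Sum>t<r2. QQ d2 L t t x y)"
    by (simp add: sum_product)
  finally show ?thesis .
qed

lemma orth_of_disjs:
  assumes "disjs d r K"
  shows "\<forall>i<r. \<forall>j<r. i \<noteq> j \<longrightarrow> ip d (K i) (K j) = 0"
proof (intro allI impI)
  fix i j assume h: "i < r" "j < r" "i \<noteq> j"
  have "\<forall>x\<in>sq d. cnj (K i $$ x) * K j $$ x = 0"
  proof
    fix x assume "x \<in> sq d"
    then obtain p q where "x = (p,q)" "p < d" "q < d" by auto
    then show "cnj (K i $$ x) * K j $$ x = 0" using assms h unfolding disjs_def by auto
  qed
  then show "ip d (K i) (K j) = 0" unfolding ip_def by (intro sum.neutral) blast
qed

lemma nz_of_nzs: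
  assumes "nzs d r K"
  shows "\<forall>i<r. ip d (K i) (K i) \<noteq> 0"
proof (intro allI impI notI)
  fix i assume i: "i < r" and z: "ip d (K i) (K i) = 0"
  obtain p q where pq: "p < d" "q < d" "K i $$ (p,q) \<noteq> 0" using assms i unfolding nzs_def by blast
  have "K i $$ (p,q) = 0" using ip_self_zero[OF z] pq by auto
  then show False using pq by simp
qed

lemma kmap_one:
  assumes Kc: "\<forall>i<r. K i \<in> carrier_mat d d" and Dc: "D \<in> carrier_mat d d"
  and h: "\<forall>p<d. \<forall>q<d. (\<Sum>n<r. PP d K n n p q) = D $$ (p,q)"
  shows "kmap d r K (1\<^sub>m d) = D"
proof (rule eq_matI)
  fix p q assume "p < dim_row D" "q < dim_col D"
  then have pq: "p < d" "q < d" using Dc by (auto dest: carrier_matD)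
  have "kmap d r K (1\<^sub>m d) $$ (p,q) = kent d r K (1\<^sub>m d) p q" using kmap_index[OF Kc _ pq] by simp
  also have "\<dots> = (\<Sum>n<r. PP d K n n p q)" unfolding kent_EE EE_one ..
  also have "\<dots> = D $$ (p,q)" using h pq by simp
  finally show "kmap d r K (1\<^sub>m d) $$ (p,q) = D $$ (p,q)" .
next
  show "dim_row (kmap d r K (1\<^sub>m d)) = dim_row D" "dim_col (kmap d r K (1\<^sub>m d)) = dim_col D"
    using carrier_matD[OF kmap_carrier[OF Kc]] carrier_matD[OF Dc] by simp_all
qed

lemma kmap_trace:
  assumes Kc: "\<forall>i<r. K i \<in> carrier_mat d d" and Dc: "D \<in> carrier_mat d d"
  and h: "\<forall>p<d. \<forall>q<d. (\<Sum>n<r. QQ d K n n p q) = cnj (D $$ (q,p))"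
  shows "\<forall>X\<in>carrier_mat d d. mtrace (mat_adjoint D * X) = mtrace (kmap d r K X)"
proof
  fix X :: "complex mat" assume X: "X \<in> carrier_mat d d"
  have dD: "dim_row D = d" "dim_col D = d" using Dc by (auto dest: carrier_matD)
  have dX: "dim_row X = d" "dim_col X = d" using X by (auto dest: carrier_matD)
  have "mtrace (mat_adjoint D * X) = (\<Sum>m<d. \<Sum>l<d. cnj (D $$ (l,m)) * X $$ (l,m))"
    unfolding mtrace_def using dD dX by (simp add: scalar_prod_def atLeast0LessThan)
  also have "\<dots> = (\<Sum>m<d. \<Sum>l<d. X $$ (l,m) * (\<Sum>n<r. QQ d K n n m l))"
    using h by (intro sum.cong refl) (simp add: mult.commute)
  also have "\<dots> = (\<Sum>m<d. \<Sum>l<d. \<Sum>n<r. \<Sum>a<d. K n $$ (a,l) * X $$ (l,m) * cnj (K n $$ (a,m)))"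
    unfolding QQ_def by (simp add: sum_distrib_left mult_ac)
  also have "\<dots> = (\<Sum>n<r. \<Sum>a<d. \<Sum>l<d. \<Sum>m<d. K n $$ (a,l) * X $$ (l,m) * cnj (K n $$ (a,m)))"
  proof -
    have "(\<Sum>m<d. \<Sum>l<d. \<Sum>n<r. \<Sum>a<d. K n $$ (a,l) * X $$ (l,m) * cnj (K n $$ (a,m)))
        = (\<Sum>n<r. \<Sum>a<d. \<Sum>m<d. \<Sum>l<d. K n $$ (a,l) * X $$ (l,m) * cnj (K n $$ (a,m)))"
      by (rule sum4_swap)
    also have "\<dots> = (\<Sum>n<r. \<Sum>a<d. \<Sum>l<d. \<Sum>m<d. K n $$ (a,l) * X $$ (l,m) * cnj (K n $$ (a,m)))"
      by (rule sum.cong[OF refl], rule sum.cong[OF refl], rule sum.swap)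
    finally show ?thesis .
  qed
  also have "\<dots> = (\<Sum>a<d. \<Sum>n<r. \<Sum>l<d. \<Sum>m<d. K n $$ (a,l) * X $$ (l,m) * cnj (K n $$ (a,m)))"
    by (rule sum.swap)
  also have "\<dots> = (\<Sum>a<d. kent d r K X a a)" unfolding kent_def ..
  also have "\<dots> = mtrace (kmap d r K X)" using mtrace_kent[OF Kc X] by simp
  finally show "mtrace (mat_adjoint D * X) = mtrace (kmap d r K X)" .
qed

definition sc :: "complex \<Rightarrow> (nat \<Rightarrow> complex mat) \<Rightarrow> nat \<Rightarrow> complex mat" where
  "sc c K i = c \<cdot>\<^sub>m K i"

lemma sc_carrier: "\<forall>i<r. K i \<in> carrier_mat d d \<Longrightarrow> \<forall>i<r. sc c K i \<in> carrier_mat d d"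
  unfolding sc_def by auto

lemma sc_index: "\<forall>i<r. K i \<in> carrier_mat d d \<Longrightarrow> i < r \<Longrightarrow> p < d \<Longrightarrow> q < d \<Longrightarrow> sc c K i $$ (p,q) = c * K i $$ (p,q)"
proof -
  assume "\<forall>i<r. K i \<in> carrier_mat d d" "i < r" "p < d" "q < d"
  then have "dim_row (K i) = d" "dim_col (K i) = d" by (auto dest: carrier_matD)
  then show ?thesis unfolding sc_def using \<open>p < d\<close> \<open>q < d\<close> by simp
qed

lemma PP_sc:
  assumes "\<forall>i<r. K i \<in> carrier_mat d d" "i < r" "j < r" "p < d" "q < d"
  shows "PP d (sc c K) i j p q = (c * cnj c) * PP d K i j p q"
  unfolding PP_def sum_distrib_left using assms by (intro sum.cong refl) (simp add: sc_index mult_ac)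

lemma QQ_sc:
  assumes "\<forall>i<r. K i \<in> carrier_mat d d" "i < r" "j < r" "p < d" "q < d"
  shows "QQ d (sc c K) i j p q = (c * cnj c) * QQ d K i j p q"
  unfolding QQ_def sum_distrib_left using assms by (intro sum.cong refl) (simp add: sc_index mult_ac)

lemma pairind_sc:
  assumes Kc: "\<forall>i<r. K i \<in> carrier_mat d d" and c: "c \<noteq> 0" and pK: "pairind d r K"
  shows "pairind d r (sc c K)"
  unfolding pairind_def
proof (rule allI, rule impI)
  fix G assume H: "(\<forall>p<d. \<forall>q<d. (\<Sum>i<r. \<Sum>j<r. G i j * PP d (sc c K) i j p q) = 0) \<and>
      (\<forall>p<d. \<forall>q<d. (\<Sum>i<r. \<Sum>j<r. G i j * QQ d (sc c K) i j p q) = 0)"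
  define G' where "G' i j = G i j * (c * cnj c)" for i j
  have "(\<forall>p<d. \<forall>q<d. (\<Sum>i<r. \<Sum>j<r. G' i j * PP d K i j p q) = 0) \<and>
      (\<forall>p<d. \<forall>q<d. (\<Sum>i<r. \<Sum>j<r. G' i j * QQ d K i j p q) = 0)"
  proof (intro conjI allI impI)
    fix p q assume pq: "p < d" "q < d"
    have "(\<Sum>i<r. \<Sum>j<r. G' i j * PP d K i j p q) = (\<Sum>i<r. \<Sum>j<r. G i j * PP d (sc c K) i j p q)"
      unfolding G'_def using PP_sc[OF Kc _ _ pq] by (intro sum.cong refl) (simp add: mult_ac)
    then show "(\<Sum>i<r. \<Sum>j<r. G' i j * PP d K i j p q) = 0" using H pq by simp
    have "(\<Sum>i<r. \<Sum>j<r. G' i j * QQ d K i j p q) = (\<Sum>i<r. \<Sum>j<r. G i j * QQ d (sc c K) i j p q)"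
      unfolding G'_def using QQ_sc[OF Kc _ _ pq] by (intro sum.cong refl) (simp add: mult_ac)
    then show "(\<Sum>i<r. \<Sum>j<r. G' i j * QQ d K i j p q) = 0" using H pq by simp
  qed
  then have "\<forall>i<r. \<forall>j<r. G' i j = 0" using pK unfolding pairind_def by blast
  then show "\<forall>i<r. \<forall>j<r. G i j = 0" unfolding G'_def using c by simp
qed

lemma disjs_sc:
  assumes Kc: "\<forall>i<r. K i \<in> carrier_mat d d" and dK: "disjs d r K"
  shows "disjs d r (sc c K)"
  using dK sc_index[OF Kc] unfolding disjs_def by (metis mult_zero_right)

lemma nzs_sc:
  assumes Kc: "\<forall>i<r. K i \<in> carrier_mat d d" and c: "c \<noteq> 0" and nK: "nzs d r K"
  shows "nzs d r (sc c K)"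
  unfolding nzs_def
proof (intro allI impI)
  fix i assume i: "i < r"
  obtain p q where pq: "p < d" "q < d" "K i $$ (p,q) \<noteq> 0" using nK i unfolding nzs_def by blast
  have "sc c K i $$ (p, q) \<noteq> 0" using sc_index[OF Kc i pq(1,2)] c pq(3) by simp
  then show "\<exists>p<d. \<exists>q<d. sc c K i $$ (p, q) \<noteq> 0" using pq by blast
qed

lemma sum2: "(\<Sum>i<2. f i) = f 0 + f (1::nat)" by (simp add: numeral_2_eq_2)
lemma sum3: "(\<Sum>i<3. f i) = f 0 + f 1 + f (2::nat)" by (simp add: eval_nat_numeral)
lemma sum4: "(\<Sum>i<4. f i) = f 0 + f 1 + f 2 + f (3::nat)" by (simp add: eval_nat_numeral)
lemma lt2: "(i::nat) < 2 \<longleftrightarrow> i = 0 \<or> i = 1" by auto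
lemma lt3: "(i::nat) < 3 \<longleftrightarrow> i = 0 \<or> i = 1 \<or> i = 2" by auto
lemma lt4: "(i::nat) < 4 \<longleftrightarrow> i = 0 \<or> i = 1 \<or> i = 2 \<or> i = 3" by auto

definition Bm :: "nat \<Rightarrow> complex mat" where
  "Bm p = mat 2 2 (\<lambda>(i,j). if p = 0 then (if i = 1 \<and> j = 1 then 1 else 0) else (if i \<noteq> j then 1 else 0))"

lemma Bm_carrier: "\<forall>p<2. Bm p \<in> carrier_mat 2 2" unfolding Bm_def by simp

lemma Bm_idx: "i < 2 \<Longrightarrow> j < 2 \<Longrightarrow> Bm p $$ (i,j) = (if p = 0 then (if i = 1 \<and> j = 1 then 1 else 0) else (if i \<noteq> j then 1 else 0))"
  unfolding Bm_def by simp

lemma PP_B: "PP 2 Bm i j p q = (\<Sum>m<2. Bm i $$ (p,m) * cnj (Bm j $$ (q,m)))" unfolding PP_def ..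

lemma B_dbasisP: "dbasisP 2 2 Bm"
  unfolding dbasisP_def
proof (intro allI impI)
  fix z :: "nat \<Rightarrow> nat \<Rightarrow> complex" and i j :: nat
  assume H: "\<forall>p<2. \<forall>q<2. (\<Sum>i<2. \<Sum>j<2. z i j * PP 2 Bm i j p q) = 0" and ij: "i < 2" "j < 2"
  have e00: "z 1 1 = 0" using H[rule_format, of 0 0] by (simp add: sum2 PP_def Bm_idx)
  have e11: "z 0 0 + z 1 1 = 0" using H[rule_format, of 1 1] by (simp add: sum2 PP_def Bm_idx)
  have e10: "z 0 1 = 0" using H[rule_format, of 1 0] by (simp add: sum2 PP_def Bm_idx)
  have e01: "z 1 0 = 0" using H[rule_format, of 0 1] by (simp add: sum2 PP_def Bm_idx)
  show "z i j = 0" using ij e00 e11 e10 e01 by (auto simp: lt2)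
qed

lemma B_dbasisQ: "dbasisQ 2 2 Bm"
  unfolding dbasisQ_def
proof (intro allI impI)
  fix z :: "nat \<Rightarrow> nat \<Rightarrow> complex" and i j :: nat
  assume H: "\<forall>p<2. \<forall>q<2. (\<Sum>i<2. \<Sum>j<2. z i j * QQ 2 Bm i j p q) = 0" and ij: "i < 2" "j < 2"
  have e00: "z 1 1 = 0" using H[rule_format, of 0 0] by (simp add: sum2 QQ_def Bm_idx)
  have e11: "z 0 0 + z 1 1 = 0" using H[rule_format, of 1 1] by (simp add: sum2 QQ_def Bm_idx)
  have e10: "z 1 0 = 0" using H[rule_format, of 1 0] by (simp add: sum2 QQ_def Bm_idx)
  have e01: "z 0 1 = 0" using H[rule_format, of 0 1] by (simp add: sum2 QQ_def Bm_idx)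
  show "z i j = 0" using ij e00 e11 e10 e01 by (auto simp: lt2)
qed

lemma B_disjs: "disjs 2 2 Bm"
  unfolding disjs_def by (auto simp: lt2 Bm_idx)

lemma B_nzs: "nzs 2 2 Bm"
  unfolding nzs_def
proof (intro allI impI)
  fix i :: nat assume "i < 2"
  then have "i = 0 \<or> i = 1" by auto
  then show "\<exists>p<2. \<exists>q<2. Bm i $$ (p, q) \<noteq> 0"
  proof
    assume "i = 0"
    moreover have "Bm 0 $$ (1,1) \<noteq> 0" by (simp add: Bm_idx)
    moreover have "(1::nat) < 2" by simp
    ultimately show ?thesis by blast
  next
    assume "i = 1"
    moreover have "Bm 1 $$ (0,1) \<noteq> 0" by (simp add: Bm_idx)
    moreover have "(1::nat) < 2" "(0::nat) < 2" by simp_all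
    ultimately show ?thesis by blast
  qed
qed

lemma B_PPsum: "I < 2 \<Longrightarrow> J < 2 \<Longrightarrow> (\<Sum>p<2. PP 2 Bm p p I J) = (if I = J then (if I = 0 then 1 else 2) else 0)"
  by (auto simp: lt2 sum2 PP_def Bm_idx)

lemma B_QQsum: "I < 2 \<Longrightarrow> J < 2 \<Longrightarrow> (\<Sum>p<2. QQ 2 Bm p p I J) = (if I = J then (if I = 0 then 1 else 2) else 0)"
  by (auto simp: lt2 sum2 QQ_def Bm_idx)

definition r2 :: complex where "r2 = complex_of_real (sqrt 2)"
lemma r2_simps[simp]: "cnj r2 = r2" "r2 * r2 = 2" "r2 \<noteq> 0"
proof -
  show "cnj r2 = r2" unfolding r2_def by simp
  have "r2 * r2 = complex_of_real (sqrt 2 * sqrt 2)" unfolding r2_def of_real_mult ..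
  also have "sqrt 2 * sqrt 2 = (2::real)" by simp
  finally show "r2 * r2 = 2" by simp
  show "r2 \<noteq> 0" unfolding r2_def by simp
qed
lemma r2_simp2[simp]: "r2 * (r2 * x) = 2 * x" by (simp flip: mult.assoc)

definition Cent :: "nat \<Rightarrow> nat \<Rightarrow> nat \<Rightarrow> complex" where
  "Cent c i j = (if c = 0 then (if (i = 0 \<and> j = 0) \<or> (i = 2 \<and> j = 2) then 1 else 0)
     else if c = 1 then (if i = 1 \<and> j = 0 then 1 else 0)
     else if c = 2 then (if i = 0 \<and> j = 1 then r2 else if i = 2 \<and> j = 0 then 1 else 0)
     else (if i = 1 \<and> j = 2 then r2 else if i = 2 \<and> j = 1 then 1 else 0))"

definition Cm :: "nat \<Rightarrow> complex mat" where "Cm c = mat 3 3 (\<lambda>(i,j). Cent c i j)"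

lemma Cm_carrier: "\<forall>c<4. Cm c \<in> carrier_mat 3 3" unfolding Cm_def by simp
lemma Cm_idx: "i < 3 \<Longrightarrow> j < 3 \<Longrightarrow> Cm c $$ (i,j) = Cent c i j" unfolding Cm_def by simp

lemma lin2: "a + r2 * b = 0 \<Longrightarrow> r2 * a + b = 0 \<Longrightarrow> a = 0 \<and> b = 0"
proof -
  assume h1: "a + r2 * b = 0" and h2: "r2 * a + b = 0"
  have "b + r2 * a = 0" using h2 by (simp add: add.commute)
  then have "b = - (r2 * a)" by (simp add: eq_neg_iff_add_eq_0)
  then have "a - 2 * a = 0" using h1 by simp
  then have "a = 0" by simp
  then show ?thesis using h2 by simp
qed

lemma C_pairind: "pairind 3 4 Cm"
  unfolding pairind_def
proof (rule allI, rule impI)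
  fix G :: "nat \<Rightarrow> nat \<Rightarrow> complex"
  assume H: "(\<forall>p<3. \<forall>q<3. (\<Sum>i<4. \<Sum>j<4. G i j * PP 3 Cm i j p q) = 0) \<and>
      (\<forall>p<3. \<forall>q<3. (\<Sum>i<4. \<Sum>j<4. G i j * QQ 3 Cm i j p q) = 0)"
  have P: "\<And>p q. p < 3 \<Longrightarrow> q < 3 \<Longrightarrow> (\<Sum>i<4. \<Sum>j<4. G i j * PP 3 Cm i j p q) = 0" using H by blast
  have Q: "\<And>p q. p < 3 \<Longrightarrow> q < 3 \<Longrightarrow> (\<Sum>i<4. \<Sum>j<4. G i j * QQ 3 Cm i j p q) = 0" using H by blast
  note S = sum3 sum4 PP_def QQ_def Cm_idx Cent_def
  have P00: "G 0 0 + 2 * G 2 2 = 0" using P[of 0 0] by (simp add: S mult_ac)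
  have P01: "G 0 1 = 0" using P[of 0 1] by (simp add: S mult_ac)
  have P02: "G 0 2 + r2 * G 2 3 = 0" using P[of 0 2] by (simp add: S mult_ac)
  have P10: "G 1 0 = 0" using P[of 1 0] by (simp add: S mult_ac)
  have P11: "G 1 1 + 2 * G 3 3 = 0" using P[of 1 1] by (simp add: S mult_ac)
  have P12: "G 1 2 + r2 * G 3 0 = 0" using P[of 1 2] by (simp add: S mult_ac)
  have P20: "G 2 0 + r2 * G 3 2 = 0" using P[of 2 0] by (simp add: S mult_ac)
  have P21: "r2 * G 0 3 + G 2 1 = 0" using P[of 2 1] by (simp add: S mult_ac)
  have P22: "G 0 0 + G 2 2 + G 3 3 = 0" using P[of 2 2] by (simp add: S mult_ac)
  have Q00: "G 0 0 + G 1 1 + G 2 2 = 0" using Q[of 0 0] by (simp add: S mult_ac)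
  have Q01: "r2 * G 2 0 + G 3 2 = 0" using Q[of 0 1] by (simp add: S mult_ac)
  have Q02: "G 0 2 + r2 * G 3 1 = 0" using Q[of 0 2] by (simp add: S mult_ac)
  have Q10: "r2 * G 0 2 + G 2 3 = 0" using Q[of 1 0] by (simp add: S mult_ac)
  have Q11: "2 * G 2 2 + G 3 3 = 0" using Q[of 1 1] by (simp add: S mult_ac)
  have Q12: "G 0 3 = 0" using Q[of 1 2] by (simp add: S mult_ac)
  have Q20: "r2 * G 1 3 + G 2 0 = 0" using Q[of 2 0] by (simp add: S mult_ac)
  have Q21: "G 3 0 = 0" using Q[of 2 1] by (simp add: S mult_ac)
  have Q22: "G 0 0 + 2 * G 3 3 = 0" using Q[of 2 2] by (simp add: S mult_ac)
  have a1: "G 0 2 = 0" "G 2 3 = 0" using lin2[OF P02 Q10] by auto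
  have a2: "G 2 0 = 0" "G 3 2 = 0" using lin2[OF P20 Q01] by auto
  have a3: "G 1 2 = 0" using P12 Q21 by simp
  have a4: "G 2 1 = 0" using P21 Q12 by simp
  have a5: "G 3 1 = 0" using Q02 a1 by simp
  have a6: "G 1 3 = 0" using Q20 a2 by simp
  have g33: "G 3 3 = - (2 * G 2 2)" using Q11 by (simp add: eq_neg_iff_add_eq_0 add.commute)
  have g00: "G 0 0 = - (2 * G 2 2)" using P00 by (simp add: eq_neg_iff_add_eq_0)
  have "- (2 * G 2 2) + 2 * (- (2 * G 2 2)) = 0" using Q22 unfolding g33 g00 .
  then have g22: "G 2 2 = 0" by simp
  then have d: "G 0 0 = 0" "G 3 3 = 0" using g33 g00 by auto
  then have d2: "G 1 1 = 0" using P11 by simp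
  show "\<forall>i<4. \<forall>j<4. G i j = 0"
    using P01 P10 Q12 Q21 a1 a2 a3 a4 a5 a6 g22 d d2 by (auto simp: lt4)
qed

lemma C_disjs: "disjs 3 4 Cm"
  unfolding disjs_def by (auto simp: lt3 lt4 Cm_idx Cent_def)

lemma C_nzs: "nzs 3 4 Cm"
  unfolding nzs_def
proof (intro allI impI)
  fix i :: nat assume "i < 4"
  then have "i = 0 \<or> i = 1 \<or> i = 2 \<or> i = 3" by auto
  moreover have "Cm 0 $$ (0,0) \<noteq> 0" "Cm 1 $$ (1,0) \<noteq> 0" "Cm 2 $$ (2,0) \<noteq> 0" "Cm 3 $$ (2,1) \<noteq> 0"
    by (simp_all add: Cm_idx Cent_def)
  moreover have "(0::nat) < 3" "(1::nat) < 3" "(2::nat) < 3" by simp_all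
  ultimately show "\<exists>p<3. \<exists>q<3. Cm i $$ (p, q) \<noteq> 0" by blast
qed

lemma C_PPsum: "I < 3 \<Longrightarrow> J < 3 \<Longrightarrow> (\<Sum>c<4. PP 3 Cm c c I J) = (if I = J then 3 else 0)"
  by (auto simp: lt3 sum3 sum4 PP_def Cm_idx Cent_def)

lemma C_QQsum: "I < 3 \<Longrightarrow> J < 3 \<Longrightarrow> (\<Sum>c<4. QQ 3 Cm c c I J) = (if I = J then 3 else 0)"
  by (auto simp: lt3 sum3 sum4 QQ_def Cm_idx Cent_def)

definition sk :: "nat \<Rightarrow> complex" where "sk k = complex_of_real (sqrt (real k - 1))"

lemma sk_cnj[simp]: "cnj (sk k) = sk k" unfolding sk_def by simp

lemma sk_sq: "k \<ge> 1 \<Longrightarrow> sk k * sk k = of_nat k - 1"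
proof -
  assume k: "k \<ge> 1"
  have "sk k * sk k = complex_of_real (sqrt (real k - 1) * sqrt (real k - 1))" unfolding sk_def of_real_mult ..
  also have "sqrt (real k - 1) * sqrt (real k - 1) = real k - 1" using k by simp
  finally show ?thesis by simp
qed

definition lam :: "nat \<Rightarrow> nat \<Rightarrow> complex" where "lam k x = (if x = 0 then 1 else sk k)"

definition Lent :: "nat \<Rightarrow> nat \<Rightarrow> nat \<Rightarrow> nat \<Rightarrow> complex" where
  "Lent k t x y = (if t = 0 then (if x = y then lam k x else 0)
     else (if x = 0 \<and> y = k - t then 1 else 0) + (if x = t \<and> y = 0 then 1 else 0))"

definition Lm :: "nat \<Rightarrow> nat \<Rightarrow> complex mat" where "Lm k t = mat k k (\<lambda>(x,y). Lent k t x y)"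

lemma Lm_carrier: "\<forall>t<k. Lm k t \<in> carrier_mat k k" unfolding Lm_def by simp
lemma Lm_idx: "x < k \<Longrightarrow> y < k \<Longrightarrow> Lm k t $$ (x,y) = Lent k t x y" unfolding Lm_def by simp
lemma lam_cnj[simp]: "cnj (lam k x) = lam k x" unfolding lam_def by simp

lemma sum_delta2:
  fixes k a b :: nat
  shows "(\<Sum>m<k. (if m = a then c else 0) + (if m = b then e else 0)) =
   (if a < k then c else 0) + (if b < k then e else (0::complex))"
  by (simp add: sum.distrib sum.delta)

lemma PP_L:
  assumes ts: "t < k" "s < k" and xy: "x < k" "y < k"
  shows "PP k (Lm k) t s x y =
   (if t = 0 then (if s = 0 then (if x = y then lam k x * lam k x else 0)
      else (if y = 0 \<and> x = k - s then lam k x else 0) + (if y = s \<and> x = 0 then lam k x else 0))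
    else if s = 0 then (if x = 0 \<and> y = k - t then lam k y else 0) + (if x = t \<and> y = 0 then lam k y else 0)
    else (if x = t \<and> y = s then 1 else 0) + (if x = 0 \<and> y = 0 \<and> t = s then 1 else 0))"
  (is "_ = ?R")
proof -
  have "PP k (Lm k) t s x y = (\<Sum>m<k. Lent k t x m * Lent k s y m)"
    unfolding PP_def using xy by (intro sum.cong refl) (simp add: Lm_idx Lent_def)
  also have "\<dots> = ?R"
  proof (cases "t = 0")
    case t0: True
    show ?thesis
    proof (cases "s = 0")
      case True
      have "(\<Sum>m<k. Lent k t x m * Lent k s y m) = (\<Sum>m<k. (if m = x then (if x = y then lam k x * lam k x else 0) else 0) + (if m = 0 then 0 else 0))"
        using t0 True by (intro sum.cong refl) (auto simp: Lent_def)
      then show ?thesis using t0 True xy by (simp only: sum_delta2) simp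
    next
      case False
      have "(\<Sum>m<k. Lent k t x m * Lent k s y m) = (\<Sum>m<k. (if m = x then (if y = 0 \<and> x = k - s then lam k x else 0) + (if y = s \<and> x = 0 then lam k x else 0) else 0) + (if m = 0 then 0 else 0))"
        using t0 False by (intro sum.cong refl) (auto simp: Lent_def)
      then show ?thesis using t0 False xy by (simp only: sum_delta2) simp
    qed
  next
    case t1: False
    show ?thesis
    proof (cases "s = 0")
      case True
      have "(\<Sum>m<k. Lent k t x m * Lent k s y m) = (\<Sum>m<k. (if m = y then (if x = 0 \<and> y = k - t then lam k y else 0) + (if x = t \<and> y = 0 then lam k y else 0) else 0) + (if m = 0 then 0 else 0))"
        using t1 True by (intro sum.cong refl) (auto simp: Lent_def)
      then show ?thesis using t1 True xy by (simp only: sum_delta2) simp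
    next
      case False
      have "(\<Sum>m<k. Lent k t x m * Lent k s y m) = (\<Sum>m<k. (if m = 0 then (if x = t \<and> y = s then 1 else 0) else 0) + (if m = k - t then (if x = 0 \<and> y = 0 \<and> t = s then 1 else 0) else 0))"
        using t1 False ts by (intro sum.cong refl) (auto simp: Lent_def)
      then show ?thesis using t1 False xy ts by (simp only: sum_delta2) simp
    qed
  qed
  finally show ?thesis .
qed

lemma QQ_L:
  assumes ts: "t < k" "s < k" and xy: "x < k" "y < k"
  shows "QQ k (Lm k) t s x y =
   (if t = 0 then (if s = 0 then (if x = y then lam k x * lam k x else 0)
      else (if y = 0 \<and> x = k - s then lam k y else 0) + (if y = s \<and> x = 0 then lam k y else 0))
    else if s = 0 then (if x = 0 \<and> y = k - t then lam k x else 0) + (if x = t \<and> y = 0 then lam k x else 0)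
    else (if x = k - s \<and> y = k - t then 1 else 0) + (if x = 0 \<and> y = 0 \<and> t = s then 1 else 0))"
  (is "_ = ?R")
proof -
  have "QQ k (Lm k) t s x y = (\<Sum>m<k. Lent k s m x * Lent k t m y)"
    unfolding QQ_def using xy by (intro sum.cong refl) (simp add: Lm_idx Lent_def)
  also have "\<dots> = ?R"
  proof (cases "t = 0")
    case t0: True
    show ?thesis
    proof (cases "s = 0")
      case True
      have "(\<Sum>m<k. Lent k s m x * Lent k t m y) = (\<Sum>m<k. (if m = x then (if x = y then lam k x * lam k x else 0) else 0) + (if m = 0 then 0 else 0))"
        using t0 True by (intro sum.cong refl) (auto simp: Lent_def)
      then show ?thesis using t0 True xy by (simp only: sum_delta2) simp
    next
      case False
      have "(\<Sum>m<k. Lent k s m x * Lent k t m y) = (\<Sum>m<k. (if m = y then (if y = 0 \<and> x = k - s then lam k y else 0) + (if y = s \<and> x = 0 then lam k y else 0) else 0) + (if m = 0 then 0 else 0))"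
        using t0 False by (intro sum.cong refl) (auto simp: Lent_def)
      then show ?thesis using t0 False xy by (simp only: sum_delta2) simp
    qed
  next
    case t1: False
    show ?thesis
    proof (cases "s = 0")
      case True
      have "(\<Sum>m<k. Lent k s m x * Lent k t m y) = (\<Sum>m<k. (if m = x then (if x = 0 \<and> y = k - t then lam k x else 0) + (if x = t \<and> y = 0 then lam k x else 0) else 0) + (if m = 0 then 0 else 0))"
        using t1 True by (intro sum.cong refl) (auto simp: Lent_def)
      then show ?thesis using t1 True xy by (simp only: sum_delta2) simp
    next
      case False
      have "(\<Sum>m<k. Lent k s m x * Lent k t m y) = (\<Sum>m<k. (if m = 0 then (if x = k - s \<and> y = k - t then 1 else 0) else 0) + (if m = s then (if x = 0 \<and> y = 0 \<and> t = s then 1 else 0) else 0))"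
        using t1 False ts by (intro sum.cong refl) (auto simp: Lent_def)
      then show ?thesis using t1 False xy ts by (simp only: sum_delta2) simp
    qed
  qed
  finally show ?thesis .
qed

lemma dsum2:
  fixes k a b a' b' :: nat
  assumes "a < k" "b < k" "a' < k" "b' < k"
  shows "(\<Sum>t<k. \<Sum>s<k. z t s * ((if t = a \<and> s = b then c else 0) + (if t = a' \<and> s = b' then c' else 0)))
     = z a b * c + z a' b' * (c'::complex)"
proof -
  have "(\<Sum>t<k. \<Sum>s<k. z t s * ((if t = a \<and> s = b then c else 0) + (if t = a' \<and> s = b' then c' else 0)))
    = (\<Sum>t<k. (if t = a then z t b * c else 0) + (if t = a' then z t b' * c' else 0))"
  proof (rule sum.cong[OF refl])
    fix t
    have "(\<Sum>s<k. z t s * ((if t = a \<and> s = b then c else 0) + (if t = a' \<and> s = b' then c' else 0)))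
       = (\<Sum>s<k. (if s = b then (if t = a then z t b * c else 0) else 0) + (if s = b' then (if t = a' then z t b' * c' else 0) else 0))"
      by (intro sum.cong refl) (auto simp: distrib_left)
    also have "\<dots> = (if t = a then z t b * c else 0) + (if t = a' then z t b' * c' else 0)"
      using assms by (simp add: sum.distrib sum.delta)
    finally show "(\<Sum>s<k. z t s * ((if t = a \<and> s = b then c else 0) + (if t = a' \<and> s = b' then c' else 0)))
       = (if t = a then z t b * c else 0) + (if t = a' then z t b' * c' else 0)" .
  qed
  also have "\<dots> = z a b * c + z a' b' * c'" using assms by (simp add: sum.distrib sum.delta)
  finally show ?thesis .
qed

lemma solve2: "A + c * B = 0 \<Longrightarrow> c * A + B = 0 \<Longrightarrow> c * c \<noteq> 1 \<Longrightarrow> A = 0 \<and> B = (0::complex)"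
proof -
  assume h1: "A + c * B = 0" and h2: "c * A + B = 0" and c: "c * c \<noteq> 1"
  have "A = - (c * B)" using h1 by (simp add: eq_neg_iff_add_eq_0)
  then have "(1 - c * c) * B = 0" using h2 by (simp add: algebra_simps)
  then have "B = 0" using c by simp
  then show ?thesis using h1 by simp
qed

lemma diag_solve:
  fixes k :: nat
  assumes k: "k \<ge> 3" and kk: "kk = of_nat k - (1::complex)"
  and d: "\<forall>t\<in>{1..<k}. z t t = - (kk * z 0 0)" and s: "(\<Sum>t<k. z t t) = 0"
  shows "z 0 0 = 0"
proof -
  have "(\<Sum>t<k. z t t) = z 0 0 + (\<Sum>t\<in>{1..<k}. z t t)"
    using k by (simp add: atLeast0LessThan[symmetric] sum.atLeast_Suc_lessThan)
  also have "(\<Sum>t\<in>{1..<k}. z t t) = (\<Sum>t\<in>{1..<k}. - (kk * z 0 0))" using d by simp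
  also have "\<dots> = of_nat (k - 1) * (- (kk * z 0 0))" by simp
  also have "of_nat (k - 1) = kk" using k kk by (simp add: of_nat_diff)
  finally have "z 0 0 * (1 - kk * kk) = 0" using s by (simp add: algebra_simps)
  moreover have "kk * kk \<noteq> 1"
  proof
    assume "kk * kk = 1"
    then have "complex_of_real ((real k - 1) * (real k - 1)) = complex_of_real 1" using kk by simp
    then have "(real k - 1) * (real k - 1) = 1" by (simp only: of_real_eq_iff)
    moreover have "(real k - 1) * (real k - 1) \<ge> 2 * 2" using k by (intro mult_mono) auto
    ultimately show False by simp
  qed
  ultimately show ?thesis by simp
qed

lemma Ssum:
  fixes k a b a' b' :: nat
  assumes "\<forall>t<k. \<forall>s<k. P t s = (if t = a \<and> s = b then c else 0) + (if t = a' \<and> s = b' then c' else 0)"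
  and "a < k" "b < k" "a' < k" "b' < k"
  shows "(\<Sum>t<k. \<Sum>s<k. z t s * P t s) = z a b * c + z a' b' * (c'::complex)"
proof -
  have "(\<Sum>t<k. \<Sum>s<k. z t s * P t s) = (\<Sum>t<k. \<Sum>s<k. z t s * ((if t = a \<and> s = b then c else 0) + (if t = a' \<and> s = b' then c' else 0)))"
    using assms(1) by (intro sum.cong refl) auto
  also have "\<dots> = z a b * c + z a' b' * c'" using dsum2 assms(2-5) by blast
  finally show ?thesis .
qed

lemma L_dbasisP:
  assumes k: "k \<ge> 3"
  shows "dbasisP k k (Lm k)"
  unfolding dbasisP_def
proof (intro allI impI)
  fix z :: "nat \<Rightarrow> nat \<Rightarrow> complex" and t0 s0 :: nat
  assume H: "\<forall>p<k. \<forall>q<k. (\<Sum>i<k. \<Sum>j<k. z i j * PP k (Lm k) i j p q) = 0" and ts0: "t0 < k" "s0 < k"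
  define kk where "kk = sk k * sk k"
  have kk: "kk = of_nat k - 1" unfolding kk_def using k sk_sq by simp
  have kk1: "kk \<noteq> 1"
  proof
    assume "kk = 1"
    then have "(of_nat k :: complex) = of_nat 2" using kk by simp
    then show False using k by (simp only: of_nat_eq_iff)
  qed
  have skk: "sk k * sk k \<noteq> 1" using kk1 kk_def by simp
  have S: "(\<Sum>i<k. \<Sum>j<k. z i j * PP k (Lm k) i j p q) = 0" if "p < k" "q < k" for p q using H that by blast
  have Fa: "z x y = 0" if xy: "1 \<le> x" "x < k" "1 \<le> y" "y < k" "x \<noteq> y" for x y
  proof -
    have "\<forall>t<k. \<forall>s<k. PP k (Lm k) t s x y = (if t = x \<and> s = y then 1 else 0) + (if t = x \<and> s = y then 0 else 0)"
      using xy by (auto simp: PP_L lam_def)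
    then have "(\<Sum>i<k. \<Sum>j<k. z i j * PP k (Lm k) i j x y) = z x y * 1 + z x y * 0"
      using xy by (intro Ssum) auto
    then show ?thesis using S[of x y] xy by simp
  qed
  have Fb: "z x x + kk * z 0 0 = 0" if xy: "1 \<le> x" "x < k" for x
  proof -
    have "\<forall>t<k. \<forall>s<k. PP k (Lm k) t s x x = (if t = x \<and> s = x then 1 else 0) + (if t = 0 \<and> s = 0 then kk else 0)"
      using xy by (auto simp: PP_L lam_def kk_def)
    then have "(\<Sum>i<k. \<Sum>j<k. z i j * PP k (Lm k) i j x x) = z x x * 1 + z 0 0 * kk"
      using xy by (intro Ssum) auto
    then show ?thesis using S[of x x] xy by (simp add: mult.commute)
  qed
  have Fc: "(\<Sum>t<k. z t t) = 0"
  proof -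
    have "(\<Sum>i<k. \<Sum>j<k. z i j * PP k (Lm k) i j 0 0) = (\<Sum>i<k. \<Sum>j<k. if j = i then z i i else 0)"
      using k by (intro sum.cong refl) (auto simp: PP_L lam_def)
    also have "\<dots> = (\<Sum>t<k. z t t)" by (simp add: sum.delta)
    finally show ?thesis using S[of 0 0] k by simp
  qed
  have Fd: "z x 0 + sk k * z 0 (k - x) = 0" if xy: "1 \<le> x" "x < k" for x
  proof -
    have "\<forall>t<k. \<forall>s<k. PP k (Lm k) t s x 0 = (if t = x \<and> s = 0 then 1 else 0) + (if t = 0 \<and> s = k - x then sk k else 0)"
      using xy by (auto simp: PP_L lam_def)
    then have "(\<Sum>i<k. \<Sum>j<k. z i j * PP k (Lm k) i j x 0) = z x 0 * 1 + z 0 (k - x) * sk k"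
      using xy by (intro Ssum) auto
    then show ?thesis using S[of x 0] xy by (simp add: mult.commute)
  qed
  have Fe: "sk k * z (k - y) 0 + z 0 y = 0" if xy: "1 \<le> y" "y < k" for y
  proof -
    have "\<forall>t<k. \<forall>s<k. PP k (Lm k) t s 0 y = (if t = k - y \<and> s = 0 then sk k else 0) + (if t = 0 \<and> s = y then 1 else 0)"
      using xy by (auto simp: PP_L lam_def)
    then have "(\<Sum>i<k. \<Sum>j<k. z i j * PP k (Lm k) i j 0 y) = z (k - y) 0 * sk k + z 0 y * 1"
      using xy by (intro Ssum) auto
    then show ?thesis using S[of 0 y] xy by (simp add: mult.commute)
  qed
  have F0: "z u 0 = 0 \<and> z 0 (k - u) = 0" if u: "1 \<le> u" "u < k" for u
  proof -
    have "sk k * z (k - (k - u)) 0 + z 0 (k - u) = 0" using Fe[of "k - u"] u by simp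
    then have "sk k * z u 0 + z 0 (k - u) = 0" using u by simp
    then show ?thesis using solve2[OF Fd[OF u]] skk by simp
  qed
  have F0': "z 0 v = 0" if v: "1 \<le> v" "v < k" for v
    using F0[of "k - v"] v by simp
  have z00: "z 0 0 = 0"
  proof (rule diag_solve[OF k kk])
    show "\<forall>t\<in>{1..<k}. z t t = - (kk * z 0 0)" using Fb by (auto simp: eq_neg_iff_add_eq_0)
    show "(\<Sum>t<k. z t t) = 0" by (rule Fc)
  qed
  show "z t0 s0 = 0"
  proof (cases "t0 = 0")
    case True
    then show ?thesis using z00 F0' ts0 by (cases "s0 = 0") auto
  next
    case False
    show ?thesis
    proof (cases "s0 = 0")
      case True then show ?thesis using F0 False ts0 by auto
    next
      case s: False
      show ?thesis
      proof (cases "t0 = s0")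
        case True
        then show ?thesis using Fb[of t0] z00 False ts0 by simp
      next
        case ne: False
        then show ?thesis using Fa[of t0 s0] False s ts0 by simp
      qed
    qed
  qed
qed

lemma L_dbasisQ:
  assumes k: "k \<ge> 3"
  shows "dbasisQ k k (Lm k)"
  unfolding dbasisQ_def
proof (intro allI impI)
  fix z :: "nat \<Rightarrow> nat \<Rightarrow> complex" and t0 s0 :: nat
  assume H: "\<forall>p<k. \<forall>q<k. (\<Sum>i<k. \<Sum>j<k. z i j * QQ k (Lm k) i j p q) = 0" and ts0: "t0 < k" "s0 < k"
  define kk where "kk = sk k * sk k"
  have kk: "kk = of_nat k - 1" unfolding kk_def using k sk_sq by simp
  have kk1: "kk \<noteq> 1"
  proof
    assume "kk = 1"
    then have "(of_nat k :: complex) = of_nat 2" using kk by simp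
    then show False using k by (simp only: of_nat_eq_iff)
  qed
  have skk: "sk k * sk k \<noteq> 1" using kk1 kk_def by simp
  have S: "(\<Sum>i<k. \<Sum>j<k. z i j * QQ k (Lm k) i j p q) = 0" if "p < k" "q < k" for p q using H that by blast
  have Fa: "z (k - y) (k - x) = 0" if xy: "1 \<le> x" "x < k" "1 \<le> y" "y < k" "x \<noteq> y" for x y
  proof -
    have "\<forall>t<k. \<forall>s<k. QQ k (Lm k) t s x y = (if t = k - y \<and> s = k - x then 1 else 0) + (if t = k - y \<and> s = k - x then 0 else 0)"
      using xy by (auto simp: QQ_L lam_def)
    then have "(\<Sum>i<k. \<Sum>j<k. z i j * QQ k (Lm k) i j x y) = z (k - y) (k - x) * 1 + z (k - y) (k - x) * 0"
      using xy by (intro Ssum) auto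
    then show ?thesis using S[of x y] xy by simp
  qed
  have Fa': "z t s = 0" if ts: "1 \<le> t" "t < k" "1 \<le> s" "s < k" "t \<noteq> s" for t s
    using Fa[of "k - s" "k - t"] ts by simp
  have Fb: "z (k - x) (k - x) + kk * z 0 0 = 0" if xy: "1 \<le> x" "x < k" for x
  proof -
    have "\<forall>t<k. \<forall>s<k. QQ k (Lm k) t s x x = (if t = k - x \<and> s = k - x then 1 else 0) + (if t = 0 \<and> s = 0 then kk else 0)"
      using xy by (auto simp: QQ_L lam_def kk_def)
    then have "(\<Sum>i<k. \<Sum>j<k. z i j * QQ k (Lm k) i j x x) = z (k - x) (k - x) * 1 + z 0 0 * kk"
      using xy by (intro Ssum) auto
    then show ?thesis using S[of x x] xy by (simp add: mult.commute)
  qed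
  have Fb': "z t t + kk * z 0 0 = 0" if "1 \<le> t" "t < k" for t
    using Fb[of "k - t"] that by simp
  have Fc: "(\<Sum>t<k. z t t) = 0"
  proof -
    have "(\<Sum>i<k. \<Sum>j<k. z i j * QQ k (Lm k) i j 0 0) = (\<Sum>i<k. \<Sum>j<k. if j = i then z i i else 0)"
      using k by (intro sum.cong refl) (auto simp: QQ_L lam_def)
    also have "\<dots> = (\<Sum>t<k. z t t)" by (simp add: sum.delta)
    finally show ?thesis using S[of 0 0] k by simp
  qed
  have Fd: "z 0 (k - x) + sk k * z x 0 = 0" if xy: "1 \<le> x" "x < k" for x
  proof -
    have "\<forall>t<k. \<forall>s<k. QQ k (Lm k) t s x 0 = (if t = 0 \<and> s = k - x then 1 else 0) + (if t = x \<and> s = 0 then sk k else 0)"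
      using xy by (auto simp: QQ_L lam_def)
    then have "(\<Sum>i<k. \<Sum>j<k. z i j * QQ k (Lm k) i j x 0) = z 0 (k - x) * 1 + z x 0 * sk k"
      using xy by (intro Ssum) auto
    then show ?thesis using S[of x 0] xy by (simp add: mult.commute)
  qed
  have Fe: "sk k * z 0 y + z (k - y) 0 = 0" if xy: "1 \<le> y" "y < k" for y
  proof -
    have "\<forall>t<k. \<forall>s<k. QQ k (Lm k) t s 0 y = (if t = 0 \<and> s = y then sk k else 0) + (if t = k - y \<and> s = 0 then 1 else 0)"
      using xy by (auto simp: QQ_L lam_def)
    then have "(\<Sum>i<k. \<Sum>j<k. z i j * QQ k (Lm k) i j 0 y) = z 0 y * sk k + z (k - y) 0 * 1"
      using xy by (intro Ssum) auto
    then show ?thesis using S[of 0 y] xy by (simp add: mult.commute)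
  qed
  have F0: "z u 0 = 0 \<and> z 0 (k - u) = 0" if u: "1 \<le> u" "u < k" for u
  proof -
    have "sk k * z 0 (k - u) + z (k - (k - u)) 0 = 0" using Fe[of "k - u"] u by simp
    then have e1: "z u 0 + sk k * z 0 (k - u) = 0" using u by (simp add: add.commute)
    have e2: "sk k * z u 0 + z 0 (k - u) = 0" using Fd[OF u] by (simp add: add.commute)
    show ?thesis using solve2[OF e1 e2] skk by simp
  qed
  have F0': "z 0 v = 0" if v: "1 \<le> v" "v < k" for v
    using F0[of "k - v"] v by simp
  have z00: "z 0 0 = 0"
  proof (rule diag_solve[OF k kk])
    show "\<forall>t\<in>{1..<k}. z t t = - (kk * z 0 0)" using Fb' by (auto simp: eq_neg_iff_add_eq_0)
    show "(\<Sum>t<k. z t t) = 0" by (rule Fc)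
  qed
  show "z t0 s0 = 0"
  proof (cases "t0 = 0")
    case True
    then show ?thesis using z00 F0' ts0 by (cases "s0 = 0") auto
  next
    case False
    show ?thesis
    proof (cases "s0 = 0")
      case True then show ?thesis using F0 False ts0 by auto
    next
      case s: False
      show ?thesis
      proof (cases "t0 = s0")
        case True
        then show ?thesis using Fb'[of t0] z00 False ts0 by simp
      next
        case ne: False
        then show ?thesis using Fa'[of t0 s0] False s ts0 by simp
      qed
    qed
  qed
qed

lemma L_disjs: "disjs k k (Lm k)"
  unfolding disjs_def by (auto simp: Lm_idx Lent_def)

lemma L_nzs: "nzs k k (Lm k)"
  unfolding nzs_def
proof (intro allI impI)
  fix t assume t: "t < k"
  show "\<exists>p<k. \<exists>q<k. Lm k t $$ (p, q) \<noteq> 0"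
  proof (cases "t = 0")
    case True
    have "Lm k t $$ (0, 0) \<noteq> 0" using t True by (simp add: Lm_idx Lent_def lam_def)
    moreover have "(0::nat) < k" using t by simp
    ultimately show ?thesis by blast
  next
    case False
    have "Lm k t $$ (t, 0) \<noteq> 0" using t False by (simp add: Lm_idx Lent_def)
    moreover have "(0::nat) < k" using t by simp
    ultimately show ?thesis using t by blast
  qed
qed

lemma L_PPsum:
  assumes k: "k \<ge> 3" and xy: "x < k" "y < k"
  shows "(\<Sum>t<k. PP k (Lm k) t t x y) = (if x = y then of_nat k else 0)"
proof -
  have kk: "sk k * sk k = of_nat k - 1" using k sk_sq by simp
  have "(\<Sum>t<k. PP k (Lm k) t t x y) = (\<Sum>t<k. (if t = 0 then (if x = y then lam k x * lam k x else 0) else 0)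
      + (if t = x then (if x = y \<and> x \<noteq> 0 then 1 else 0) else 0)
      + (if x = 0 \<and> y = 0 then 1 else 0) - (if t = 0 then (if x = 0 \<and> y = 0 then 1 else 0) else 0))"
    using xy by (intro sum.cong refl) (auto simp: PP_L)
  also have "\<dots> = (if x = y then lam k x * lam k x else 0) + (if x = y \<and> x \<noteq> 0 then 1 else 0)
      + of_nat k * (if x = 0 \<and> y = 0 then 1 else 0) - (if x = 0 \<and> y = 0 then 1 else 0)"
    using xy k by (simp add: sum.distrib sum_subtractf sum.delta)
  also have "\<dots> = (if x = y then of_nat k else 0)"
    using kk by (auto simp: lam_def)
  finally show ?thesis .
qed

lemma L_QQsum:
  assumes k: "k \<ge> 3" and xy: "x < k" "y < k"
  shows "(\<Sum>t<k. QQ k (Lm k) t t x y) = (if x = y then of_nat k else 0)"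
proof -
  have kk: "sk k * sk k = of_nat k - 1" using k sk_sq by simp
  have "(\<Sum>t<k. QQ k (Lm k) t t x y) = (\<Sum>t<k. (if t = 0 then (if x = y then lam k x * lam k x else 0) else 0)
      + (if t = k - x then (if x = y \<and> x \<noteq> 0 then 1 else 0) else 0)
      + (if x = 0 \<and> y = 0 then 1 else 0) - (if t = 0 then (if x = 0 \<and> y = 0 then 1 else 0) else 0))"
    using xy by (intro sum.cong refl) (auto simp: QQ_L)
  also have "\<dots> = (if x = y then lam k x * lam k x else 0) + (if x = y \<and> x \<noteq> 0 then 1 else 0)
      + of_nat k * (if x = 0 \<and> y = 0 then 1 else 0) - (if x = 0 \<and> y = 0 then 1 else 0)"
    using xy k by (simp add: sum.distrib sum_subtractf sum.delta)
  also have "\<dots> = (if x = y then of_nat k else 0)"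
    using kk by (auto simp: lam_def)
  finally show ?thesis .
qed

definition Af :: "nat \<Rightarrow> complex mat" where "Af = kf 4 Bm Cm"

lemma Af_carrier: "\<forall>a<8. Af a \<in> carrier_mat 6 6"
  unfolding Af_def
proof (intro allI impI)
  fix a :: nat assume "a < 8"
  then have "a < 2*4" by simp
  then have "kf 4 Bm Cm a \<in> carrier_mat (2*3) (2*3)" by (rule kf_carrier[OF Bm_carrier Cm_carrier])
  then show "kf 4 Bm Cm a \<in> carrier_mat 6 6" by simp
qed

lemma Af_pairind: "pairind 6 8 Af"
  using tensor2[OF Bm_carrier Cm_carrier B_dbasisP B_dbasisQ C_pairind] unfolding Af_def by simp

lemma Af_disjs: "disjs 6 8 Af"
  using kf_disjs[OF Bm_carrier Cm_carrier B_disjs C_disjs] unfolding Af_def by simp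

lemma Af_nzs: "nzs 6 8 Af"
  using kf_nzs[OF Bm_carrier Cm_carrier B_nzs C_nzs] unfolding Af_def by simp

lemma Af_PP:
  assumes "P < 2" "P' < 2" "u < 3" "u' < 3"
  shows "(\<Sum>a<8. PP 6 Af a a (P*3+u) (P'*3+u')) =
    (if P = P' then (if P = 0 then 1 else 2) else 0) * (if u = u' then 3 else 0)"
proof -
  have "(\<Sum>a<2*4. PP (2*3) (kf 4 Bm Cm) a a (P*3+u) (P'*3+u')) = (\<Sum>p<2. PP 2 Bm p p P P') * (\<Sum>c<4. PP 3 Cm c c u u')"
    by (rule kf_PPdiag[OF Bm_carrier Cm_carrier assms])
  then show ?thesis unfolding Af_def using B_PPsum[OF assms(1,2)] C_PPsum[OF assms(3,4)] by simp
qed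

lemma Af_QQ:
  assumes "P < 2" "P' < 2" "u < 3" "u' < 3"
  shows "(\<Sum>a<8. QQ 6 Af a a (P*3+u) (P'*3+u')) =
    (if P = P' then (if P = 0 then 1 else 2) else 0) * (if u = u' then 3 else 0)"
proof -
  have "(\<Sum>a<2*4. QQ (2*3) (kf 4 Bm Cm) a a (P*3+u) (P'*3+u')) = (\<Sum>p<2. QQ 2 Bm p p P P') * (\<Sum>c<4. QQ 3 Cm c c u u')"
    by (rule kf_QQdiag[OF Bm_carrier Cm_carrier assms])
  then show ?thesis unfolding Af_def using B_QQsum[OF assms(1,2)] C_QQsum[OF assms(3,4)] by simp
qed

definition K0 :: "nat \<Rightarrow> nat \<Rightarrow> complex mat" where "K0 k = kf k Af (Lm k)"

definition cval :: "nat \<Rightarrow> complex" where "cval k = complex_of_real (1 / (3 * sqrt 3 * real k))"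

definition Kfin :: "nat \<Rightarrow> nat \<Rightarrow> complex mat" where "Kfin k = sc (cval k) (K0 k)"

lemma cval_nz: "k \<ge> 1 \<Longrightarrow> cval k \<noteq> 0" unfolding cval_def by simp

lemma cval_sq: "k \<ge> 1 \<Longrightarrow> cval k * cnj (cval k) = 1 / (27 * of_nat k * of_nat k)"
proof -
  assume k: "k \<ge> 1"
  have "cval k * cnj (cval k) = complex_of_real ((1 / (3 * sqrt 3 * real k)) * (1 / (3 * sqrt 3 * real k)))"
    unfolding cval_def by simp
  also have "(1 / (3 * sqrt 3 * real k)) * (1 / (3 * sqrt 3 * real k)) = 1 / (9 * (sqrt 3 * sqrt 3) * (real k * real k))"
    by (simp add: field_simps)
  also have "sqrt 3 * sqrt 3 = (3::real)" by simp
  finally show ?thesis by simp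
qed

lemma K0_carrier: "\<forall>a<8*k. K0 k a \<in> carrier_mat (6*k) (6*k)"
  unfolding K0_def using kf_carrier[OF Af_carrier Lm_carrier] by blast

lemma Kfin_carrier: "\<forall>a<8*k. Kfin k a \<in> carrier_mat (6*k) (6*k)"
  unfolding Kfin_def by (rule sc_carrier[OF K0_carrier])

lemma Kfin_pairind:
  assumes k: "k \<ge> 3" shows "pairind (6*k) (8*k) (Kfin k)"
proof -
  have p: "pairind (6*k) (8*k) (K0 k)" unfolding K0_def
    using tensor1[OF Af_carrier Lm_carrier Af_pairind L_dbasisP[OF k] L_dbasisQ[OF k]] .
  have c: "cval k \<noteq> 0" using k cval_nz by simp
  show ?thesis unfolding Kfin_def by (rule pairind_sc[OF K0_carrier c p])
qed

lemma Kfin_disjs: "disjs (6*k) (8*k) (Kfin k)"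
proof -
  have "disjs (6*k) (8*k) (K0 k)" unfolding K0_def
    using kf_disjs[OF Af_carrier Lm_carrier Af_disjs L_disjs] .
  then show ?thesis unfolding Kfin_def by (rule disjs_sc[OF K0_carrier])
qed

lemma Kfin_nzs:
  assumes k: "k \<ge> 3" shows "nzs (6*k) (8*k) (Kfin k)"
proof -
  have "nzs (6*k) (8*k) (K0 k)" unfolding K0_def
    using kf_nzs[OF Af_carrier Lm_carrier Af_nzs L_nzs] .
  moreover have c: "cval k \<noteq> 0" using k cval_nz by simp
  ultimately show ?thesis unfolding Kfin_def by (intro nzs_sc[OF K0_carrier])
qed

lemma sigma_dims: "dim_row sigma_mat = 2" "dim_col sigma_mat = 2" unfolding sigma_mat_def by simp_all

lemma D1_carrier: "D1_mat k \<in> carrier_mat (6*k) (6*k)"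
  unfolding D1_mat_def by (intro carrier_matI) (simp_all add: sigma_dims)

lemma D1_idx:
  assumes k: "k \<ge> 1" and P: "P < 2" "P' < 2" and u: "u < 3" "u' < 3" and xy: "x < k" "y < k"
  shows "D1_mat k $$ ((P*3+u)*k+x, (P'*3+u')*k+y) =
    (if P = P' \<and> u = u' \<and> x = y then (if P = 0 then 1 else 2) / (9 * of_nat k) else 0)"
proof -
  define S where "S = kron sigma_mat ((1/3) \<cdot>\<^sub>m 1\<^sub>m 3)"
  define Ik where "Ik = (1 / of_nat k :: complex) \<cdot>\<^sub>m 1\<^sub>m k"
  have dS: "dim_row S = 6" "dim_col S = 6" unfolding S_def by (simp_all add: sigma_dims)
  have dI: "dim_row Ik = k" "dim_col Ik = k" unfolding Ik_def by simp_all
  have I6: "P*3+u < 6" "P'*3+u' < 6" using P u by auto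
  have i: "(P*3+u)*k+x < 6*k" "(P'*3+u')*k+y < 6*k" using divmod_lt(1)[OF I6(1) xy(1)] divmod_lt(1)[OF I6(2) xy(2)] by auto
  have e0: "D1_mat k $$ ((P*3+u)*k+x, (P'*3+u')*k+y) = S $$ (P*3+u, P'*3+u') * Ik $$ (x, y)"
    unfolding D1_mat_def S_def[symmetric] Ik_def[symmetric]
    using i dS dI divmod_lt[OF I6(1) xy(1)] divmod_lt[OF I6(2) xy(2)] by (simp add: kron_index)
  have e1: "S $$ (P*3+u, P'*3+u') = sigma_mat $$ (P, P') * ((1/3) \<cdot>\<^sub>m 1\<^sub>m 3) $$ (u, u')"
    unfolding S_def using I6 divmod_lt[OF P(1) u(1)] divmod_lt[OF P(2) u(2)] by (simp add: kron_index sigma_dims)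
  have e2: "Ik $$ (x,y) = (if x = y then 1 / of_nat k else 0)" unfolding Ik_def using xy by simp
  have e3: "((1/3) \<cdot>\<^sub>m 1\<^sub>m 3) $$ (u, u') = (if u = u' then 1/3 else (0::complex))" using u by simp
  have e: "D1_mat k $$ ((P*3+u)*k+x, (P'*3+u')*k+y) =
     sigma_mat $$ (P, P') * (if u = u' then 1/3 else 0) * (if x = y then 1 / of_nat k else 0)"
    by (simp only: e0 e1 e2 e3)
  have sg: "sigma_mat $$ (P, P') = (if P = P' then (if P = 0 then 1/3 else 2/3) else 0)"
    unfolding sigma_mat_def using P by (auto simp: lt2)
  show ?thesis unfolding e sg using k by (auto simp: field_simps)
qed

lemma idx_decomp:
  fixes i k :: nat
  assumes "i < 6*k"
  obtains P u x where "P < 2" "u < 3" "x < k" "i = (P*3+u)*k+x"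
proof -
  have a: "i div k < 6" "i mod k < k" "i = (i div k)*k + i mod k" using decomp_idx[OF assms] by auto
  have b: "i div k < 2*3" using a by simp
  note c = decomp_idx[OF b]
  show ?thesis using that c a by metis
qed

lemma Kfin_PP:
  assumes k: "k \<ge> 3"
  shows "\<forall>p<6*k. \<forall>q<6*k. (\<Sum>n<8*k. PP (6*k) (Kfin k) n n p q) = D1_mat k $$ (p,q)"
proof (intro allI impI)
  fix p q assume pq: "p < 6*k" "q < 6*k"
  obtain P u x where Pux: "P < 2" "u < 3" "x < k" "p = (P*3+u)*k+x" using idx_decomp[OF pq(1)] by blast
  obtain P' u' y where Puy: "P' < 2" "u' < 3" "y < k" "q = (P'*3+u')*k+y" using idx_decomp[OF pq(2)] by blast
  have I: "P*3+u < 6" "P'*3+u' < 6" using Pux Puy by auto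
  have "(\<Sum>n<8*k. PP (6*k) (Kfin k) n n p q) = (\<Sum>n<8*k. cval k * cnj (cval k) * PP (6*k) (K0 k) n n p q)"
    unfolding Kfin_def using PP_sc[OF K0_carrier _ _ pq] by simp
  also have "\<dots> = cval k * cnj (cval k) * (\<Sum>n<8*k. PP (6*k) (K0 k) n n p q)"
    by (simp add: sum_distrib_left)
  also have "(\<Sum>n<8*k. PP (6*k) (K0 k) n n p q) = (\<Sum>a<8. PP 6 Af a a (P*3+u) (P'*3+u')) * (\<Sum>t<k. PP k (Lm k) t t x y)"
    unfolding K0_def Pux(4) Puy(4) by (rule kf_PPdiag[OF Af_carrier Lm_carrier I Pux(3) Puy(3)])
  also have "\<dots> = (if P = P' then (if P = 0 then 1 else 2) else 0) * (if u = u' then 3 else 0) * (if x = y then of_nat k else 0)"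
    using Af_PP[OF Pux(1) Puy(1) Pux(2) Puy(2)] L_PPsum[OF k Pux(3) Puy(3)] by simp
  finally have "(\<Sum>n<8*k. PP (6*k) (Kfin k) n n p q) = 1 / (27 * of_nat k * of_nat k) *
     ((if P = P' then (if P = 0 then 1 else 2) else 0) * (if u = u' then 3 else 0) * (if x = y then of_nat k else 0))"
    using cval_sq k by simp
  also have "\<dots> = D1_mat k $$ (p,q)"
    unfolding Pux(4) Puy(4) using D1_idx[OF _ Pux(1) Puy(1) Pux(2) Puy(2) Pux(3) Puy(3)] k
    by (auto simp: field_simps)
  finally show "(\<Sum>n<8*k. PP (6*k) (Kfin k) n n p q) = D1_mat k $$ (p,q)" .
qed

lemma Kfin_QQ:
  assumes k: "k \<ge> 3"
  shows "\<forall>p<6*k. \<forall>q<6*k. (\<Sum>n<8*k. QQ (6*k) (Kfin k) n n p q) = cnj (D1_mat k $$ (q,p))"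
proof (intro allI impI)
  fix p q assume pq: "p < 6*k" "q < 6*k"
  obtain P u x where Pux: "P < 2" "u < 3" "x < k" "p = (P*3+u)*k+x" using idx_decomp[OF pq(1)] by blast
  obtain P' u' y where Puy: "P' < 2" "u' < 3" "y < k" "q = (P'*3+u')*k+y" using idx_decomp[OF pq(2)] by blast
  have I: "P*3+u < 6" "P'*3+u' < 6" using Pux Puy by auto
  have "(\<Sum>n<8*k. QQ (6*k) (Kfin k) n n p q) = (\<Sum>n<8*k. cval k * cnj (cval k) * QQ (6*k) (K0 k) n n p q)"
    unfolding Kfin_def using QQ_sc[OF K0_carrier _ _ pq] by simp
  also have "\<dots> = cval k * cnj (cval k) * (\<Sum>n<8*k. QQ (6*k) (K0 k) n n p q)"
    by (simp add: sum_distrib_left)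
  also have "(\<Sum>n<8*k. QQ (6*k) (K0 k) n n p q) = (\<Sum>a<8. QQ 6 Af a a (P*3+u) (P'*3+u')) * (\<Sum>t<k. QQ k (Lm k) t t x y)"
    unfolding K0_def Pux(4) Puy(4) by (rule kf_QQdiag[OF Af_carrier Lm_carrier I Pux(3) Puy(3)])
  also have "\<dots> = (if P = P' then (if P = 0 then 1 else 2) else 0) * (if u = u' then 3 else 0) * (if x = y then of_nat k else 0)"
    using Af_QQ[OF Pux(1) Puy(1) Pux(2) Puy(2)] L_QQsum[OF k Pux(3) Puy(3)] by simp
  finally have "(\<Sum>n<8*k. QQ (6*k) (Kfin k) n n p q) = 1 / (27 * of_nat k * of_nat k) *
     ((if P = P' then (if P = 0 then 1 else 2) else 0) * (if u = u' then 3 else 0) * (if x = y then of_nat k else 0))"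
    using cval_sq k by simp
  also have "\<dots> = cnj (D1_mat k $$ (q,p))"
    unfolding Pux(4) Puy(4) using D1_idx[OF _ Puy(1) Pux(1) Puy(2) Pux(2) Puy(3) Pux(3)] k
    by (auto simp: field_simps)
  finally show "(\<Sum>n<8*k. QQ (6*k) (Kfin k) n n p q) = cnj (D1_mat k $$ (q,p))" .
qed

theorem mainTheorem10:
  fixes k :: nat
  assumes "k \<ge> 3"
  shows "\<exists>\<Phi>. extreme_point_of \<Phi> (CP_set (6 * k) (6 * k) (D1_mat k) (D1_mat k)) \<and>
             choi_rank (6 * k) (6 * k) \<Phi> = 8 * k"
proof (intro exI conjI)
  have Kc: "\<forall>i<8*k. Kfin k i \<in> carrier_mat (6*k) (6*k)" by (rule Kfin_carrier)
  show "extreme_point_of (kmap (6*k) (8*k) (Kfin k)) (CP_set (6 * k) (6 * k) (D1_mat k) (D1_mat k))"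
  proof (rule extreme_general[OF Kc])
    show "\<forall>i<8*k. \<forall>j<8*k. i \<noteq> j \<longrightarrow> ip (6*k) (Kfin k i) (Kfin k j) = 0"
      by (rule orth_of_disjs[OF Kfin_disjs])
    show "\<forall>i<8*k. ip (6*k) (Kfin k i) (Kfin k i) \<noteq> 0"
      by (rule nz_of_nzs[OF Kfin_nzs[OF assms]])
    show "pairind (6*k) (8*k) (Kfin k)" by (rule Kfin_pairind[OF assms])
    show "kmap (6*k) (8*k) (Kfin k) (1\<^sub>m (6*k)) = D1_mat k"
      by (rule kmap_one[OF Kc D1_carrier Kfin_PP[OF assms]])
    show "\<forall>X\<in>carrier_mat (6*k) (6*k). mtrace (mat_adjoint (D1_mat k) * X) = mtrace (kmap (6*k) (8*k) (Kfin k) X)"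
      by (rule kmap_trace[OF Kc D1_carrier Kfin_QQ[OF assms]])
  qed
  show "choi_rank (6 * k) (6 * k) (kmap (6*k) (8*k) (Kfin k)) = 8 * k"
    using choi_rank_general[OF Kc] Kfin_disjs Kfin_nzs[OF assms] unfolding disjs_def nzs_def by blast
qed

end
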